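(* In the deconvolution setting of the context, suppose that the source condition $(\varphi,T)\in\mathcal F(0,\beta,C)$ and Assumption D hold and $\alpha_n^{3/2+\beta\wedge1}n^{1/2}\to0$. Then for every $\gamma\in(0,1)$, $\mathbb E|C^{2,\mathrm g}_{1-\gamma,n}|_\infty$ and $\mathbb E|C^{2,\mathrm{ci}}_{1-\gamma,n}|_\infty$ are $O\left(\frac{1}{\alpha_n^{3/2}n^{1/2}}\right)$.
   Context: Deconvolution model: $Y=Z+U$, $Z,U$ independent real random variables; $Z$ has density $\varphi$, $U$ has known density $f$, $Y$ has density $r$. On $L_2[a,b]$: $(T\varphi)(y)=\int\varphi(z)f(y-z)dz$, $(T^*\psi)(z)=\int\psi(y)f(y-z)dy$, $r=T\varphi$. From an i.i.d. sample $(Y_i)_{i=1}^n$: $\widehat{T^*r}(z)=\frac1n\sum_if(Y_i-z)$, $\hat\varphi_{\alpha_n}=(\alpha_nI+T^*T)^{-1}\widehat{T^*r}$, $\alpha_n>0$, $\alpha_n\to0$. $\|\cdot\|$: $L_2$ norm; $\|\cdot\|_\infty$: sup norm; $\|A\|_{2,\infty}=\sup_{\|\psi\|\le1}\|A\psi\|_\infty$. Source class $\mathcal F(0,\beta,C)$: pairs $(\varphi,T)$ with $\varphi$ continuous on $[a,b]$, $\|\varphi\|_\infty\le M$, $T^*$ bounded from $L_2[a,b]$ into continuous functions, $\varphi=(T^*T)^\beta T^*\psi$, $\psi\in L_2[a,b]$, $\|T^*\|_{2,\infty}\vee\|\psi\|\vee\|T\|^{-1}\le C$. Assumption D: (i)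 i.i.d. sample; (ii) $f,\varphi,r$ continuous and compactly supported in subsets of $[a,b]$; (iii) $f\in C^s_M[a,b]$, $s\in(0,1]$; (iv) $T$ one-to-one. Confidence sets: $C^{2,s}_{1-\gamma,n}(z)=[\hat\varphi_{\alpha_n}(z)-q^{2,s},\hat\varphi_{\alpha_n}(z)+q^{2,s}]$ with $q^{2,\mathrm{ci}}=2\|\nu^\varepsilon_{2,n}\|_\infty+\frac{3\|f\|_\infty(\|T^*\|_{2,\infty}/2+\alpha_n^{1/2})\sqrt{2\log(2/\gamma)}}{\alpha_n^{3/2}n^{1/2}}$, $\nu^\varepsilon_{2,n}=\frac1n\sum_i(\alpha_nI+T^*T)^{-1}\varepsilon_if(Y_i-\cdot)$ (i.i.d. Rademacher $\varepsilon_i$ independent of the data), and $q^{2,\mathrm g}=c_{2,1-\gamma}\frac{\|T^*\|_{2,\infty}/2+\alpha_n^{1/2}}{\alpha_n^{3/2}n^{1/2}}$, $c_{2,1-\gamma}$ the $(1-\gamma)$-quantile of $\|\mathbb G_2\|_\infty$ for a centered Gaussian process with covariance $\mathbb E[f(Y-s)f(Y-t)]$. Diameter $|C^{2,s}_{1-\gamma,n}|_\infty=2q^{2,s}$. *)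

theory Defs
  imports "HOL-Probability.Probability" "HOL-Library.Landau_Symbols"
begin

text \<open>L2[a,b] (functions real => real, identified a.e. only through the
  inner products below), its inner product and norm, and the sup norm on [a,b].\<close>

definition L2ab :: "real \<Rightarrow> real \<Rightarrow> (real \<Rightarrow> real) set" where
  "L2ab a b = {g. g \<in> borel_measurable lborel \<and> set_integrable lborel {a..b} (\<lambda>x. (g x)\<^sup>2)}"

definition inner2 :: "real \<Rightarrow> real \<Rightarrow> (real \<Rightarrow> real) \<Rightarrow> (real \<Rightarrow> real) \<Rightarrow> real" where
  "inner2 a b g h = (LINT x:{a..b}|lborel. g x * h x)"

definition norm2 :: "real \<Rightarrow> real \<Rightarrow> (real \<Rightarrow> real) \<Rightarrow> real" where
  "norm2 a b g = sqrt (LINT x:{a..b}|lborel. (g x)\<^sup>2)"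

definition supnorm :: "real \<Rightarrow> real \<Rightarrow> (real \<Rightarrow> real) \<Rightarrow> real" where
  "supnorm a b g = (SUP z\<in>{a..b}. \<bar>g z\<bar>)"

definition Top :: "real \<Rightarrow> real \<Rightarrow> (real \<Rightarrow> real) \<Rightarrow> (real \<Rightarrow> real) \<Rightarrow> (real \<Rightarrow> real)" where
  "Top a b f g = (\<lambda>y. LINT z:{a..b}|lborel. g z * f (y - z))"

definition Tadj :: "real \<Rightarrow> real \<Rightarrow> (real \<Rightarrow> real) \<Rightarrow> (real \<Rightarrow> real) \<Rightarrow> (real \<Rightarrow> real)" where
  "Tadj a b f \<psi> = (\<lambda>z. LINT y:{a..b}|lborel. \<psi> y * f (y - z))"

definition opnorm_2inf :: "real \<Rightarrow> real \<Rightarrow> ((real \<Rightarrow> real) \<Rightarrow> (real \<Rightarrow> real)) \<Rightarrow> real" where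
  "opnorm_2inf a b A = (SUP \<psi>\<in>{\<psi>\<in>L2ab a b. norm2 a b \<psi> \<le> 1}. supnorm a b (A \<psi>))"

definition opnorm_2 :: "real \<Rightarrow> real \<Rightarrow> ((real \<Rightarrow> real) \<Rightarrow> (real \<Rightarrow> real)) \<Rightarrow> real" where
  "opnorm_2 a b A = (SUP g\<in>{g\<in>L2ab a b. norm2 a b g \<le> 1}. norm2 a b (A g))"

text \<open>Tikhonov resolvent (alpha I + T*T)^{-1} g, applied to continuous g on [a,b]:
  the unique L2[a,b] function h (vanishing outside [a,b]) with
  alpha h + T*T h = g on [a,b].\<close>

definition resolvent :: "real \<Rightarrow> real \<Rightarrow> (real \<Rightarrow> real) \<Rightarrow> real \<Rightarrow> (real \<Rightarrow> real) \<Rightarrow> (real \<Rightarrow> real)" where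
  "resolvent a b f \<alpha> g = (THE h. h \<in> L2ab a b \<and> (\<forall>z. z \<notin> {a..b} \<longrightarrow> h z = 0) \<and>
      (\<forall>z\<in>{a..b}. \<alpha> * h z + Tadj a b f (Top a b f h) z = g z))"

text \<open>Source condition phi = (T*T)^beta T* psi, written through the spectral
  calculus of the compact self-adjoint operator T*T: for every eigenpair
  (lambda, e) of T*T, <phi, e> = lambda^beta <T* psi, e>.\<close>

definition source_cond :: "real \<Rightarrow> real \<Rightarrow> (real \<Rightarrow> real) \<Rightarrow> real \<Rightarrow> (real \<Rightarrow> real) \<Rightarrow> (real \<Rightarrow> real) \<Rightarrow> bool" where
  "source_cond a b f \<beta> \<phi> \<psi> \<longleftrightarrow>
     (\<forall>lam e. e \<in> L2ab a b \<and> norm2 a b e > 0 \<and>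
        (\<forall>z\<in>{a..b}. Tadj a b f (Top a b f e) z = lam * e z) \<longrightarrow>
        inner2 a b \<phi> e = lam powr \<beta> * inner2 a b (Tadj a b f \<psi>) e)"

definition source_class :: "real \<Rightarrow> real \<Rightarrow> real \<Rightarrow> real \<Rightarrow> real \<Rightarrow> (real \<Rightarrow> real) \<Rightarrow> (real \<Rightarrow> real) \<Rightarrow> bool" where
  "source_class a b M \<beta> C \<phi> f \<longleftrightarrow>
     continuous_on {a..b} \<phi> \<and> supnorm a b \<phi> \<le> M \<and>
     (\<forall>\<psi>\<in>L2ab a b. continuous_on {a..b} (Tadj a b f \<psi>)) \<and>
     bdd_above ((\<lambda>\<psi>. supnorm a b (Tadj a b f \<psi>)) ` {\<psi>\<in>L2ab a b. norm2 a b \<psi> \<le> 1}) \<and>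
     (\<exists>\<psi>\<in>L2ab a b. source_cond a b f \<beta> \<phi> \<psi> \<and>
        max (opnorm_2inf a b (Tadj a b f)) (max (norm2 a b \<psi>) (inverse (opnorm_2 a b (Top a b f)))) \<le> C)"

definition centered_gaussian_process ::
  "'b measure \<Rightarrow> real set \<Rightarrow> (real \<Rightarrow> 'b \<Rightarrow> real) \<Rightarrow> (real \<Rightarrow> real \<Rightarrow> real) \<Rightarrow> bool" where
  "centered_gaussian_process N I G Cov \<longleftrightarrow> prob_space N \<and>
     (\<forall>t\<in>I. G t \<in> borel_measurable N) \<and>
     (\<forall>(m::nat) (ts::nat \<Rightarrow> real) (c::nat \<Rightarrow> real). (\<forall>j<m. ts j \<in> I) \<longrightarrow>
        (let v = (\<Sum>j<m. \<Sum>k<m. c j * c k * Cov (ts j) (ts k)) in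
          if v > 0 then distributed N lborel (\<lambda>\<omega>. \<Sum>j<m. c j * G (ts j) \<omega>) (normal_density 0 (sqrt v))
          else (AE \<omega> in N. (\<Sum>j<m. c j * G (ts j) \<omega>) = 0)))"

definition nu_eps :: "real \<Rightarrow> real \<Rightarrow> (real \<Rightarrow> real) \<Rightarrow> real \<Rightarrow> nat \<Rightarrow> (nat \<Rightarrow> 'a \<Rightarrow> real) \<Rightarrow> (nat \<Rightarrow> 'a \<Rightarrow> real) \<Rightarrow> 'a \<Rightarrow> (real \<Rightarrow> real)" where
  "nu_eps a b f \<alpha> n Y \<epsilon> \<omega> = resolvent a b f \<alpha> (\<lambda>z. (1 / real n) * (\<Sum>i<n. \<epsilon> i \<omega> * f (Y i \<omega> - z)))"

definition q_ci :: "real \<Rightarrow> real \<Rightarrow> (real \<Rightarrow> real) \<Rightarrow> real \<Rightarrow> real \<Rightarrow> nat \<Rightarrow> (nat \<Rightarrow> 'a \<Rightarrow> real) \<Rightarrow> (nat \<Rightarrow> 'a \<Rightarrow> real) \<Rightarrow> 'a \<Rightarrow> real" where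
  "q_ci a b f \<gamma> \<alpha> n Y \<epsilon> \<omega> =
     2 * supnorm a b (nu_eps a b f \<alpha> n Y \<epsilon> \<omega>) +
     3 * supnorm a b f * (opnorm_2inf a b (Tadj a b f) / 2 + sqrt \<alpha>) * sqrt (2 * ln (2 / \<gamma>))
       / (\<alpha> powr (3/2) * sqrt (real n))"

definition sup_quantile :: "'b measure \<Rightarrow> real \<Rightarrow> real \<Rightarrow> (real \<Rightarrow> 'b \<Rightarrow> real) \<Rightarrow> real \<Rightarrow> real" where
  "sup_quantile N a b G \<gamma> =
     Inf {x. measure N {\<omega>\<in>space N. (SUP t\<in>{a..b}. \<bar>G t \<omega>\<bar>) \<le> x} \<ge> 1 - \<gamma>}"

definition q_g :: "'b measure \<Rightarrow> (real \<Rightarrow> 'b \<Rightarrow> real) \<Rightarrow> real \<Rightarrow> real \<Rightarrow> (real \<Rightarrow> real) \<Rightarrow> real \<Rightarrow> real \<Rightarrow> nat \<Rightarrow> real" where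
  "q_g N G a b f \<gamma> \<alpha> n =
     sup_quantile N a b G \<gamma> * (opnorm_2inf a b (Tadj a b f) / 2 + sqrt \<alpha>) / (\<alpha> powr (3/2) * sqrt (real n))"

end

theory Submission
  imports Defs
begin

lemma holder_cont:
  fixes F :: "real \<Rightarrow> real"
  assumes "s > 0" "L \<ge> 0" "\<And>x y. \<bar>F x - F y\<bar> \<le> L * \<bar>x - y\<bar> powr s"
  shows "continuous_on UNIV F"
proof -
  have "isCont F x" for x
  proof -
    have "(\<lambda>y. L * \<bar>y - x\<bar> powr s) \<midarrow>x\<rightarrow> L * \<bar>x - x\<bar> powr s"
      using assms(1) by (intro tendsto_intros continuous_intros) auto
    then have t: "(\<lambda>y. L * \<bar>y - x\<bar> powr s) \<midarrow>x\<rightarrow> 0" using assms(1) by simp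
    have b: "- (L * \<bar>y - x\<bar> powr s) \<le> F y - F x \<and> F y - F x \<le> L * \<bar>y - x\<bar> powr s" for y
      using assms(3)[of y x] by linarith
    have t2: "(\<lambda>y. - (L * \<bar>y - x\<bar> powr s)) \<midarrow>x\<rightarrow> 0" using tendsto_minus[OF t] by simp
    have "(\<lambda>y. F y - F x) \<midarrow>x\<rightarrow> 0"
      by (rule tendsto_sandwich[OF _ _ t2 t]) (use b in \<open>auto intro!: always_eventually\<close>)
    then show ?thesis unfolding isCont_def using LIM_zero_cancel by blast
  qed
  then show ?thesis by (simp add: continuous_at_imp_continuous_on)
qed

locale dc =
  fixes a b M s :: real and f :: "real \<Rightarrow> real"
  assumes ab: "a < b" and s0: "0 < s" and M0: "0 < M"
  assumes fcont: "continuous_on UNIV f"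
  assumes fbd: "\<And>y. \<bar>f y\<bar> \<le> M"
  assumes fhol: "\<And>x y. \<bar>f x - f y\<bar> \<le> M * \<bar>x - y\<bar> powr s"
begin

definition Tp :: "(real \<Rightarrow> real) \<Rightarrow> real \<Rightarrow> real" where
  "Tp u y = integral {a..b} (\<lambda>z. u z * f (y - z))"
definition Ta :: "(real \<Rightarrow> real) \<Rightarrow> real \<Rightarrow> real" where
  "Ta v z = integral {a..b} (\<lambda>y. v y * f (y - z))"
definition K :: "(real \<Rightarrow> real) \<Rightarrow> real \<Rightarrow> real" where
  "K u = Ta (Tp u)"
definition ip :: "(real \<Rightarrow> real) \<Rightarrow> (real \<Rightarrow> real) \<Rightarrow> real" where
  "ip u v = integral {a..b} (\<lambda>x. u x * v x)"
definition nr :: "(real \<Rightarrow> real) \<Rightarrow> real" where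
  "nr u = sqrt (ip u u)"
definition L1 :: "(real \<Rightarrow> real) \<Rightarrow> real" where
  "L1 u = integral {a..b} (\<lambda>x. \<bar>u x\<bar>)"

lemma fb2: "\<bar>c\<bar> * \<bar>f y\<bar> \<le> M * \<bar>c\<bar>"
  using mult_left_mono[OF fbd[of y], of "\<bar>c\<bar>"] by (simp add: mult.commute)

lemma fc[continuous_intros]: "continuous_on S g \<Longrightarrow> continuous_on S (\<lambda>x. f (g x))"
  using continuous_on_compose2[OF fcont] by blast

lemma intg: "continuous_on {a..b} (u::real\<Rightarrow>real) \<Longrightarrow> u integrable_on {a..b}"
  by (rule integrable_continuous_real)

lemma cont_prod1: "continuous_on {a..b} (u::real\<Rightarrow>real) \<Longrightarrow> continuous_on {a..b} (\<lambda>z. u z * f (y - z))"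
  by (intro continuous_intros) auto
lemma cont_prod2: "continuous_on {a..b} (v::real\<Rightarrow>real) \<Longrightarrow> continuous_on {a..b} (\<lambda>y. v y * f (y - z))"
  by (intro continuous_intros) auto

lemma L1_nonneg: "continuous_on {a..b} u \<Longrightarrow> 0 \<le> L1 u"
  unfolding L1_def by (intro integral_nonneg intg continuous_intros) auto

lemma ip_self_nonneg: "continuous_on {a..b} u \<Longrightarrow> 0 \<le> ip u u"
  unfolding ip_def by (intro integral_nonneg intg continuous_intros) auto

lemma int_bound:
  fixes u c :: "real \<Rightarrow> real"
  assumes "continuous_on {a..b} u" "\<And>x. x \<in> {a..b} \<Longrightarrow> \<bar>u x\<bar> \<le> c x" "continuous_on {a..b} c"
  shows "\<bar>integral {a..b} u\<bar> \<le> integral {a..b} c"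
  using integral_norm_bound_integral[OF intg[OF assms(1)] intg[OF assms(3)]] assms(2) by auto

lemma Tp_bound: "continuous_on {a..b} u \<Longrightarrow> \<bar>Tp u y\<bar> \<le> M * L1 u"
proof -
  assume u: "continuous_on {a..b} u"
  have "\<bar>Tp u y\<bar> \<le> integral {a..b} (\<lambda>z. M * \<bar>u z\<bar>)"
    unfolding Tp_def
    by (rule int_bound[OF cont_prod1[OF u]])
       (use fbd M0 in \<open>auto simp: abs_mult fb2 intro!: continuous_intros u\<close>)
  then show ?thesis by (simp add: L1_def)
qed

lemma Ta_bound: "continuous_on {a..b} u \<Longrightarrow> \<bar>Ta u y\<bar> \<le> M * L1 u"
proof -
  assume u: "continuous_on {a..b} u"
  have "\<bar>Ta u y\<bar> \<le> integral {a..b} (\<lambda>z. M * \<bar>u z\<bar>)"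
    unfolding Ta_def
    by (rule int_bound[OF cont_prod2[OF u]])
       (use fbd M0 in \<open>auto simp: abs_mult fb2 intro!: continuous_intros u\<close>)
  then show ?thesis by (simp add: L1_def)
qed

lemma Tp_holder: "continuous_on {a..b} u \<Longrightarrow> \<bar>Tp u y - Tp u y'\<bar> \<le> (M * L1 u) * \<bar>y - y'\<bar> powr s"
proof -
  assume u: "continuous_on {a..b} u"
  have "Tp u y - Tp u y' = integral {a..b} (\<lambda>z. u z * (f (y - z) - f (y' - z)))"
    unfolding Tp_def by (subst integral_diff[symmetric]) (auto intro!: intg cont_prod1 u simp: algebra_simps)
  also have "\<bar>\<dots>\<bar> \<le> integral {a..b} (\<lambda>z. \<bar>u z\<bar> * (M * \<bar>y - y'\<bar> powr s))"
  proof (rule int_bound)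
    show "continuous_on {a..b} (\<lambda>z. u z * (f (y - z) - f (y' - z)))" by (intro continuous_intros u)
    show "continuous_on {a..b} (\<lambda>z. \<bar>u z\<bar> * (M * \<bar>y - y'\<bar> powr s))" by (intro continuous_intros u)
    fix z show "\<bar>u z * (f (y - z) - f (y' - z))\<bar> \<le> \<bar>u z\<bar> * (M * \<bar>y - y'\<bar> powr s)"
      using fhol[of "y - z" "y' - z"] by (simp add: abs_mult mult_left_mono)
  qed
  also have "\<dots> = (M * L1 u) * \<bar>y - y'\<bar> powr s"
    by (simp add: L1_def mult.commute mult.left_commute)
  finally show ?thesis .
qed

lemma Ta_holder: "continuous_on {a..b} u \<Longrightarrow> \<bar>Ta u y - Ta u y'\<bar> \<le> (M * L1 u) * \<bar>y - y'\<bar> powr s"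
proof -
  assume u: "continuous_on {a..b} u"
  have "Ta u y - Ta u y' = integral {a..b} (\<lambda>z. u z * (f (z - y) - f (z - y')))"
    unfolding Ta_def by (subst integral_diff[symmetric]) (auto intro!: intg cont_prod2 u simp: algebra_simps)
  also have "\<bar>\<dots>\<bar> \<le> integral {a..b} (\<lambda>z. \<bar>u z\<bar> * (M * \<bar>y - y'\<bar> powr s))"
  proof (rule int_bound)
    show "continuous_on {a..b} (\<lambda>z. u z * (f (z - y) - f (z - y')))" by (intro continuous_intros u)
    show "continuous_on {a..b} (\<lambda>z. \<bar>u z\<bar> * (M * \<bar>y - y'\<bar> powr s))" by (intro continuous_intros u)
    fix z show "\<bar>u z * (f (z - y) - f (z - y'))\<bar> \<le> \<bar>u z\<bar> * (M * \<bar>y - y'\<bar> powr s)"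
      using fhol[of "z - y" "z - y'"] by (simp add: abs_mult mult_left_mono abs_minus_commute)
  qed
  also have "\<dots> = (M * L1 u) * \<bar>y - y'\<bar> powr s"
    by (simp add: L1_def mult.commute mult.left_commute)
  finally show ?thesis .
qed

lemma Tp_cont: "continuous_on {a..b} u \<Longrightarrow> continuous_on UNIV (Tp u)"
  using holder_cont[OF s0 _ Tp_holder] L1_nonneg M0 by auto
lemma Ta_cont: "continuous_on {a..b} u \<Longrightarrow> continuous_on UNIV (Ta u)"
  using holder_cont[OF s0 _ Ta_holder] L1_nonneg M0 by auto
lemma Tp_cont': "continuous_on {a..b} u \<Longrightarrow> continuous_on S (Tp u)"
  using Tp_cont continuous_on_subset by blast
lemma Ta_cont': "continuous_on {a..b} u \<Longrightarrow> continuous_on S (Ta u)"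
  using Ta_cont continuous_on_subset by blast
lemma K_cont': "continuous_on {a..b} u \<Longrightarrow> continuous_on S (K u)"
  unfolding K_def by (intro Ta_cont' Tp_cont')

lemma Tp_cong: "(\<And>z. z \<in> {a..b} \<Longrightarrow> u z = u' z) \<Longrightarrow> Tp u = Tp u'"
  unfolding Tp_def by (intro ext integral_cong) auto
lemma Ta_cong: "(\<And>z. z \<in> {a..b} \<Longrightarrow> u z = u' z) \<Longrightarrow> Ta u = Ta u'"
  unfolding Ta_def by (intro ext integral_cong) auto
lemma K_cong: "(\<And>z. z \<in> {a..b} \<Longrightarrow> u z = u' z) \<Longrightarrow> K u = K u'"
  unfolding K_def by (metis Tp_cong)

lemma Tp_add: "continuous_on {a..b} u \<Longrightarrow> continuous_on {a..b} v \<Longrightarrow>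
   Tp (\<lambda>z. u z + v z) y = Tp u y + Tp v y"
  unfolding Tp_def by (subst integral_add[symmetric]) (auto intro!: intg cont_prod1 simp: algebra_simps)
lemma Tp_cmult: "Tp (\<lambda>z. c * u z) y = c * Tp u y"
  unfolding Tp_def by (subst integral_mult_right[symmetric]) (simp add: mult.assoc)
lemma Ta_add: "continuous_on {a..b} u \<Longrightarrow> continuous_on {a..b} v \<Longrightarrow>
   Ta (\<lambda>z. u z + v z) y = Ta u y + Ta v y"
  unfolding Ta_def by (subst integral_add[symmetric]) (auto intro!: intg cont_prod2 simp: algebra_simps)
lemma Ta_cmult: "Ta (\<lambda>z. c * u z) y = c * Ta u y"
  unfolding Ta_def by (subst integral_mult_right[symmetric]) (simp add: mult.assoc)

lemma K_add: "continuous_on {a..b} u \<Longrightarrow> continuous_on {a..b} v \<Longrightarrow>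
   K (\<lambda>z. u z + v z) y = K u y + K v y"
  unfolding K_def by (simp add: Tp_add Ta_add[symmetric] Tp_cont' cong: Ta_cong)
lemma K_cmult: "K (\<lambda>z. c * u z) y = c * K u y"
proof -
  have "Tp (\<lambda>z. c * u z) = (\<lambda>y. c * Tp u y)" by (rule ext, rule Tp_cmult)
  then show ?thesis unfolding K_def by (simp add: Ta_cmult)
qed
lemma K_lin: "continuous_on {a..b} u \<Longrightarrow> continuous_on {a..b} v \<Longrightarrow>
   K (\<lambda>z. c * u z + d * v z) y = c * K u y + d * K v y"
  by (subst K_add) (auto intro!: continuous_intros simp: K_cmult)

lemma K_sum: "finite S \<Longrightarrow> (\<And>j. j \<in> S \<Longrightarrow> continuous_on {a..b} (u j)) \<Longrightarrow>
   K (\<lambda>z. \<Sum>j\<in>S. c j * u j z) y = (\<Sum>j\<in>S. c j * K (u j) y)"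
proof (induction S rule: finite_induct)
  case empty
  have "K (\<lambda>z. 0 * 0) y = 0 * K (\<lambda>z. 0) y" by (rule K_cmult)
  then show ?case by simp
next
  case (insert x F)
  have "K (\<lambda>z. \<Sum>j\<in>insert x F. c j * u j z) y = K (\<lambda>z. c x * u x z + 1 * (\<Sum>j\<in>F. c j * u j z)) y"
    using insert by simp
  also have "\<dots> = c x * K (u x) y + 1 * K (\<lambda>z. \<Sum>j\<in>F. c j * u j z) y"
    using insert by (intro K_lin) (auto intro!: continuous_intros)
  finally show ?case using insert by simp
qed

lemma ip_cong: "(\<And>z. z \<in> {a..b} \<Longrightarrow> u z = u' z) \<Longrightarrow> (\<And>z. z \<in> {a..b} \<Longrightarrow> v z = v' z) \<Longrightarrow> ip u v = ip u' v'"
  unfolding ip_def by (intro integral_cong) auto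

lemma int3:
  fixes F G H :: "real \<Rightarrow> real"
  assumes "continuous_on {a..b} F" "continuous_on {a..b} G" "continuous_on {a..b} H"
  shows "integral {a..b} (\<lambda>x. p * F x + q * G x + r * H x) = p * integral {a..b} F + q * integral {a..b} G + r * integral {a..b} H"
  using assms by (simp add: integral_add integral_mult_right intg continuous_intros)

lemma ip_quad:
  fixes u v :: "real \<Rightarrow> real"
  assumes "continuous_on {a..b} u" "continuous_on {a..b} v"
  shows "ip (\<lambda>x. p * u x + q * v x) (\<lambda>x. p * u x + q * v x) = p\<^sup>2 * ip u u + (2*p*q) * ip u v + q\<^sup>2 * ip v v"
proof -
  have "ip (\<lambda>x. p * u x + q * v x) (\<lambda>x. p * u x + q * v x) =
     integral {a..b} (\<lambda>x. p\<^sup>2 * (u x * u x) + (2*p*q) * (u x * v x) + q\<^sup>2 * (v x * v x))"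
    unfolding ip_def by (intro integral_cong) (simp add: algebra_simps power2_eq_square)
  also have "\<dots> = p\<^sup>2 * ip u u + (2*p*q) * ip u v + q\<^sup>2 * ip v v"
    unfolding ip_def by (rule int3) (use assms in \<open>auto intro!: continuous_intros\<close>)
  finally show ?thesis .
qed

lemma CS_sq:
  fixes u v :: "real \<Rightarrow> real"
  assumes u: "continuous_on {a..b} u" and v: "continuous_on {a..b} v"
  shows "(ip u v)\<^sup>2 \<le> ip u u * ip v v"
proof -
  have q: "0 \<le> t\<^sup>2 * ip u u + (2*t*(-1)) * ip u v + (-1)\<^sup>2 * ip v v" for t
  proof -
    have "continuous_on {a..b} (\<lambda>x. t * u x + (-1) * v x)" by (intro continuous_intros u v)
    from ip_self_nonneg[OF this] show ?thesis unfolding ip_quad[OF u v, of t "-1"] .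
  qed
  show ?thesis
  proof (cases "ip u u = 0")
    case True
    have "ip u v = 0"
    proof (rule ccontr)
      assume ne: "ip u v \<noteq> 0"
      have "0 \<le> (2*((ip v v + 1)/(2 * ip u v))*(-1)) * ip u v + ip v v"
        using q[of "(ip v v + 1)/(2 * ip u v)"] True by simp
      also have "\<dots> = -1" using ne by (simp add: field_simps)
      finally show False by simp
    qed
    then show ?thesis using True by simp
  next
    case False
    then have pos: "ip u u > 0" using ip_self_nonneg[OF u] by simp
    have "0 \<le> (ip u v / ip u u)\<^sup>2 * ip u u + (2*(ip u v / ip u u)*(-1)) * ip u v + ip v v"
      using q[of "ip u v / ip u u"] by simp
    also have "\<dots> = ip v v - (ip u v)\<^sup>2 / ip u u" using pos by (simp add: field_simps power2_eq_square)
    finally show ?thesis using pos by (simp add: field_simps)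
  qed
qed

lemma CS: "continuous_on {a..b} u \<Longrightarrow> continuous_on {a..b} v \<Longrightarrow> \<bar>ip u v\<bar> \<le> nr u * nr v"
proof -
  assume u: "continuous_on {a..b} u" and v: "continuous_on {a..b} v"
  have "\<bar>ip u v\<bar> = sqrt ((ip u v)\<^sup>2)" by simp
  also have "\<dots> \<le> sqrt (ip u u * ip v v)" by (rule real_sqrt_le_mono[OF CS_sq[OF u v]])
  also have "\<dots> = nr u * nr v" by (simp add: nr_def real_sqrt_mult)
  finally show ?thesis .
qed

lemma ip_one: "ip (\<lambda>x. 1) (\<lambda>x. 1) = b - a"
  using ab by (simp add: ip_def)

lemma nr_nonneg: "continuous_on {a..b} u \<Longrightarrow> 0 \<le> nr u" unfolding nr_def using ip_self_nonneg by simp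

lemma L1_le_nr: "continuous_on {a..b} u \<Longrightarrow> L1 u \<le> sqrt (b - a) * nr u"
proof -
  assume u: "continuous_on {a..b} u"
  have "L1 u = ip (\<lambda>x. \<bar>u x\<bar>) (\<lambda>x. 1)" by (simp add: L1_def ip_def)
  also have "\<dots> \<le> nr (\<lambda>x. \<bar>u x\<bar>) * nr (\<lambda>x. 1)"
  proof -
    have c: "continuous_on {a..b} (\<lambda>x. \<bar>u x\<bar>)" by (intro continuous_intros u)
    have "continuous_on {a..b} (\<lambda>x::real. 1::real)" by simp
    from CS[OF c this] show ?thesis by linarith
  qed
  also have "nr (\<lambda>x. \<bar>u x\<bar>) = nr u" by (simp add: nr_def ip_def)
  also have "nr (\<lambda>x. 1) = sqrt (b - a)" by (simp add: nr_def ip_one)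
  finally show ?thesis by (simp add: mult.commute)
qed

lemma L1_le_sup: "continuous_on {a..b} u \<Longrightarrow> (\<And>x. x \<in> {a..b} \<Longrightarrow> \<bar>u x\<bar> \<le> B) \<Longrightarrow> L1 u \<le> (b - a) * B"
proof -
  assume u: "continuous_on {a..b} u" and B: "\<And>x. x \<in> {a..b} \<Longrightarrow> \<bar>u x\<bar> \<le> B"
  have "L1 u \<le> integral {a..b} (\<lambda>x. B)"
    unfolding L1_def by (rule integral_le) (use B u in \<open>auto intro!: intg continuous_intros\<close>)
  then show ?thesis using ab by simp
qed

lemma nr_le_sup: "continuous_on {a..b} u \<Longrightarrow> (\<And>x. x \<in> {a..b} \<Longrightarrow> \<bar>u x\<bar> \<le> B) \<Longrightarrow> nr u \<le> sqrt (b - a) * B"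
proof -
  assume u: "continuous_on {a..b} u" and B: "\<And>x. x \<in> {a..b} \<Longrightarrow> \<bar>u x\<bar> \<le> B"
  have B0: "0 \<le> B" using B[of a] ab by auto
  have "ip u u \<le> integral {a..b} (\<lambda>x. B\<^sup>2)"
    unfolding ip_def
  proof (rule integral_le)
    fix x assume "x \<in> {a..b}"
    then show "u x * u x \<le> B\<^sup>2" using B[of x] B0
      by (metis abs_ge_zero abs_mult_self_eq mult_mono power2_eq_square)
  qed (use u in \<open>auto intro!: intg continuous_intros\<close>)
  then have "ip u u \<le> (b - a) * B\<^sup>2" using ab by simp
  then have "nr u \<le> sqrt ((b - a) * B\<^sup>2)" unfolding nr_def by simp
  also have "\<dots> = sqrt (b - a) * B" using B0 by (simp add: real_sqrt_mult)
  finally show ?thesis .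
qed

lemma adjoint:
  fixes u v :: "real \<Rightarrow> real"
  assumes u: "continuous_on {a..b} u" and v: "continuous_on {a..b} v"
  shows "ip v (Tp u) = ip u (Ta v)"
proof -
  have c: "continuous_on (cbox (a,a) (b,b)) (\<lambda>(y,z). v y * (u z * f (y - z)))"
  proof -
    have "cbox (a,a) (b,b) = {a..b} \<times> {a..b}" by (simp add: cbox_Pair_eq)
    moreover have "continuous_on ({a..b} \<times> {a..b}) (\<lambda>p. v (fst p) * (u (snd p) * f (fst p - snd p)))"
      by (intro continuous_intros continuous_on_compose2[OF v] continuous_on_compose2[OF u]) auto
    ultimately show ?thesis by (simp add: case_prod_beta)
  qed
  have "ip v (Tp u) = integral {a..b} (\<lambda>y. integral {a..b} (\<lambda>z. v y * (u z * f (y - z))))"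
    unfolding ip_def Tp_def by (simp only: integral_mult_right)
  also have "\<dots> = integral {a..b} (\<lambda>z. integral {a..b} (\<lambda>y. v y * (u z * f (y - z))))"
    using integral_swap_continuous[OF c] by simp
  also have "\<dots> = integral {a..b} (\<lambda>z. u z * integral {a..b} (\<lambda>y. v y * f (y - z)))"
  proof (rule integral_cong)
    fix z
    have "integral {a..b} (\<lambda>y. v y * (u z * f (y - z))) = integral {a..b} (\<lambda>y. u z * (v y * f (y - z)))"
      by (rule integral_cong) (simp add: algebra_simps)
    then show "integral {a..b} (\<lambda>y. v y * (u z * f (y - z))) = u z * integral {a..b} (\<lambda>y. v y * f (y - z))"
      by (simp only: integral_mult_right)
  qed
  also have "\<dots> = ip u (Ta v)"
    unfolding ip_def Ta_def ..
  finally show ?thesis .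
qed

definition LL :: real where "LL = M\<^sup>2 * (b - a)\<^sup>2"

lemma LL_nonneg: "0 \<le> LL" unfolding LL_def by simp

lemma Tp_cont_ab: "continuous_on {a..b} u \<Longrightarrow> continuous_on {a..b} (Tp u)"
  by (rule Tp_cont')

lemma K_pt: "continuous_on {a..b} r \<Longrightarrow> \<bar>K r z\<bar> \<le> M * sqrt (b - a) * nr (Tp r)"
proof -
  assume r: "continuous_on {a..b} r"
  have "\<bar>K r z\<bar> \<le> M * L1 (Tp r)" unfolding K_def by (rule Ta_bound[OF Tp_cont_ab[OF r]])
  also have "\<dots> \<le> M * (sqrt (b - a) * nr (Tp r))"
    using L1_le_nr[OF Tp_cont_ab[OF r]] M0 by (simp add: mult_left_mono)
  finally show ?thesis by (simp add: mult.assoc)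
qed

lemma P_eq: "continuous_on {a..b} r \<Longrightarrow> ip (Tp r) (Tp r) = ip r (K r)"
  unfolding K_def by (rule adjoint) (auto intro: Tp_cont_ab)

lemma K_sup: "continuous_on {a..b} w \<Longrightarrow> (\<And>x. x \<in> {a..b} \<Longrightarrow> \<bar>w x\<bar> \<le> B) \<Longrightarrow> \<bar>K w z\<bar> \<le> M\<^sup>2 * (b - a)\<^sup>2 * B"
proof -
  assume w: "continuous_on {a..b} w" and B: "\<And>x. x \<in> {a..b} \<Longrightarrow> \<bar>w x\<bar> \<le> B"
  have l1: "L1 w \<le> (b - a) * B" by (rule L1_le_sup[OF w B])
  have "\<bar>K w z\<bar> \<le> M * L1 (Tp w)" unfolding K_def by (rule Ta_bound[OF Tp_cont_ab[OF w]])
  also have "L1 (Tp w) \<le> (b - a) * (M * L1 w)"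
    by (rule L1_le_sup[OF Tp_cont_ab[OF w]]) (rule Tp_bound[OF w])
  also have "\<dots> \<le> (b - a) * (M * ((b - a) * B))"
    using l1 M0 ab by (intro mult_left_mono) auto
  finally show ?thesis using M0 by (simp add: power2_eq_square mult_ac mult_left_mono)
qed

lemma K_nr: "continuous_on {a..b} w \<Longrightarrow> \<bar>K w z\<bar> \<le> M\<^sup>2 * (b - a) * sqrt (b - a) * nr w"
proof -
  assume w: "continuous_on {a..b} w"
  have "\<bar>K w z\<bar> \<le> M * L1 (Tp w)" unfolding K_def by (rule Ta_bound[OF Tp_cont_ab[OF w]])
  also have "L1 (Tp w) \<le> (b - a) * (M * L1 w)"
    by (rule L1_le_sup[OF Tp_cont_ab[OF w]]) (rule Tp_bound[OF w])
  also have "\<dots> \<le> (b - a) * (M * (sqrt (b - a) * nr w))"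
    using L1_le_nr[OF w] M0 ab by (intro mult_left_mono) auto
  finally show ?thesis using M0 by (simp add: power2_eq_square mult_ac mult_left_mono)
qed

lemma contraction:
  assumes r: "continuous_on {a..b} r" and t: "0 < \<tau>" "\<tau> * (2 * \<alpha> + LL) \<le> 2" "\<tau> * \<alpha> \<le> 1"
  shows "ip (\<lambda>z. (1 - \<tau> * \<alpha>) * r z + (- \<tau>) * K r z) (\<lambda>z. (1 - \<tau> * \<alpha>) * r z + (- \<tau>) * K r z)
          \<le> (1 - \<tau> * \<alpha>)\<^sup>2 * ip r r"
proof -
  have Kc: "continuous_on {a..b} (K r)" by (rule K_cont'[OF r])
  define P where "P = ip r (K r)"
  have P0: "0 \<le> P" unfolding P_def using P_eq[OF r] ip_self_nonneg[OF Tp_cont_ab[OF r]] by simp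
  have sq: "(K r z)\<^sup>2 \<le> M\<^sup>2 * (b - a) * P" for z
  proof -
    have "\<bar>K r z\<bar> \<le> M * sqrt (b - a) * nr (Tp r)" by (rule K_pt[OF r])
    then have "(K r z)\<^sup>2 \<le> (M * sqrt (b - a) * nr (Tp r))\<^sup>2"
      by (metis abs_ge_zero abs_le_square_iff abs_of_nonneg order_trans power2_abs)
    also have "\<dots> = M\<^sup>2 * (b - a) * P"
      using ab ip_self_nonneg[OF Tp_cont_ab[OF r]] P_eq[OF r]
      by (simp add: P_def nr_def power_mult_distrib)
    finally show ?thesis .
  qed
  have Q: "ip (K r) (K r) \<le> LL * P"
  proof -
    have "ip (K r) (K r) \<le> integral {a..b} (\<lambda>x. M\<^sup>2 * (b - a) * P)"
      unfolding ip_def by (rule integral_le) (use sq Kc in \<open>auto simp: power2_eq_square intro!: intg continuous_intros\<close>)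
    then show ?thesis using ab by (simp add: LL_def power2_eq_square mult_ac)
  qed
  have e: "ip (\<lambda>z. (1 - \<tau> * \<alpha>) * r z + (- \<tau>) * K r z) (\<lambda>z. (1 - \<tau> * \<alpha>) * r z + (- \<tau>) * K r z)
     = (1 - \<tau> * \<alpha>)\<^sup>2 * ip r r + ((2 * (1 - \<tau> * \<alpha>) * (- \<tau>)) * P + \<tau>\<^sup>2 * ip (K r) (K r))"
    unfolding P_def by (subst ip_quad[OF r Kc]) simp
  have "(2 * (1 - \<tau> * \<alpha>) * (- \<tau>)) * P + \<tau>\<^sup>2 * ip (K r) (K r) \<le> (2 * (1 - \<tau> * \<alpha>) * (- \<tau>)) * P + \<tau>\<^sup>2 * (LL * P)"
    using Q t by (intro add_left_mono mult_left_mono) auto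
  also have "(2 * (1 - \<tau> * \<alpha>) * (- \<tau>)) * P + \<tau>\<^sup>2 * (LL * P) = \<tau> * P * (\<tau> * (2 * \<alpha> + LL) - 2)"
    by (simp add: algebra_simps power2_eq_square)
  also have "\<dots> \<le> 0" using t P0 by (intro mult_nonneg_nonpos) auto
  finally show ?thesis unfolding e by linarith
qed

lemma zero_by_geom:
  fixes x q C :: real
  assumes "0 \<le> q" "q < 1" "\<And>k. \<bar>x\<bar> \<le> C * q ^ k"
  shows "x = 0"
proof -
  have "(\<lambda>k. C * q ^ k) \<longlonglongrightarrow> C * 0"
    using assms by (intro tendsto_mult tendsto_const LIMSEQ_power_zero) auto
  then have "\<bar>x\<bar> \<le> C * 0" by (rule tendsto_lowerbound) (use assms in auto)
  then show ?thesis by simp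
qed

lemma cont_bound:
  fixes g :: "real \<Rightarrow> real"
  assumes "continuous_on {a..b} g"
  obtains G where "0 \<le> G" "\<And>z. z \<in> {a..b} \<Longrightarrow> \<bar>g z\<bar> \<le> G"
proof -
  have "bounded (g ` {a..b})" by (intro compact_imp_bounded compact_continuous_image assms) auto
  then obtain G where "G > 0" "\<And>y. y \<in> g ` {a..b} \<Longrightarrow> norm y \<le> G" by (auto simp: bounded_pos)
  then show ?thesis using that[of G] by auto
qed

lemma existence:
  fixes g :: "real \<Rightarrow> real"
  assumes \<alpha>: "0 < \<alpha>" and g: "continuous_on {a..b} g"
  shows "\<exists>h. continuous_on {a..b} h \<and> (\<forall>z\<in>{a..b}. \<alpha> * h z + K h z = g z)"
proof -
  define \<tau> where "\<tau> = 1 / (\<alpha> + LL + 1)"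
  have \<tau>0: "0 < \<tau>" unfolding \<tau>_def using \<alpha> LL_nonneg by simp
  have \<tau>1: "\<tau> * (2 * \<alpha> + LL) \<le> 2" unfolding \<tau>_def using \<alpha> LL_nonneg by (simp add: field_simps)
  have \<tau>2: "\<tau> * \<alpha> < 1" unfolding \<tau>_def using \<alpha> LL_nonneg by (simp add: field_simps)
  define q where "q = 1 - \<tau> * \<alpha>"
  have q0: "0 \<le> q" "q < 1" unfolding q_def using \<tau>2 \<tau>0 \<alpha> by auto
  define q' where "q' = (1 + q) / 2"
  have q'0: "q \<le> q'" "q' < 1" "0 \<le> q'" "0 < q' - q" unfolding q'_def using q0 by auto
  define F where "F = (\<lambda>w z. q * w z - \<tau> * K w z)"
  define r where "r = (\<lambda>k. (F ^^ k) (\<lambda>z. - g z))"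
  have r0: "r 0 = (\<lambda>z. - g z)" by (simp add: r_def)
  have rS: "r (Suc k) = (\<lambda>z. q * r k z - \<tau> * K (r k) z)" for k by (simp add: r_def F_def)
  have rc: "continuous_on {a..b} (r k)" for k
    by (induction k) (auto simp: r0 rS intro!: continuous_intros g K_cont')
  define c where "c = M\<^sup>2 * (b - a) * sqrt (b - a)"
  have c0: "0 \<le> c" unfolding c_def using ab by simp
  have rL2: "ip (r k) (r k) \<le> (q ^ k)\<^sup>2 * ip g g" for k
  proof (induction k)
    case 0 show ?case by (simp add: r0 ip_def)
  next
    case (Suc k)
    have "ip (r (Suc k)) (r (Suc k)) = ip (\<lambda>z. (1 - \<tau> * \<alpha>) * r k z + (- \<tau>) * K (r k) z) (\<lambda>z. (1 - \<tau> * \<alpha>) * r k z + (- \<tau>) * K (r k) z)"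
      by (simp add: rS q_def)
    also have "\<dots> \<le> q\<^sup>2 * ip (r k) (r k)" unfolding q_def
      by (rule contraction[OF rc \<tau>0 \<tau>1]) (use \<tau>2 in auto)
    also have "\<dots> \<le> q\<^sup>2 * ((q ^ k)\<^sup>2 * ip g g)" by (intro mult_left_mono Suc) auto
    finally show ?case by (simp add: power2_eq_square algebra_simps)
  qed
  have gnr: "0 \<le> nr g" by (rule nr_nonneg[OF g])
  have rnr: "nr (r k) \<le> q ^ k * nr g" for k
  proof -
    have "nr (r k) \<le> sqrt ((q ^ k)\<^sup>2 * ip g g)" unfolding nr_def by (rule real_sqrt_le_mono[OF rL2])
    also have "\<dots> = q ^ k * nr g" using q0 by (simp add: real_sqrt_mult nr_def)
    finally show ?thesis .
  qed
  obtain G where G: "0 \<le> G" "\<And>z. z \<in> {a..b} \<Longrightarrow> \<bar>g z\<bar> \<le> G" using cont_bound[OF g] by blast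
  define A where "A = max G (\<tau> * c * nr g / (q' - q))"
  have A0: "0 \<le> A" unfolding A_def using G by simp
  have A1: "\<tau> * c * nr g \<le> (q' - q) * A"
  proof -
    have "\<tau> * c * nr g / (q' - q) \<le> A" unfolding A_def by simp
    then have "(q' - q) * (\<tau> * c * nr g / (q' - q)) \<le> (q' - q) * A" using q'0 by (intro mult_left_mono) auto
    then show ?thesis using q'0 by simp
  qed
  have rsup: "\<bar>r k z\<bar> \<le> A * q' ^ k" if z: "z \<in> {a..b}" for k z
    using z
  proof (induction k arbitrary: z)
    case 0 then show ?case using G(2)[of z] by (simp add: r0 A_def le_max_iff_disj)
  next
    case (Suc k)
    have "\<bar>r (Suc k) z\<bar> \<le> q * \<bar>r k z\<bar> + \<tau> * \<bar>K (r k) z\<bar>"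
    proof -
      have "\<bar>r (Suc k) z\<bar> = \<bar>q * r k z - \<tau> * K (r k) z\<bar>" by (simp add: rS)
      also have "\<dots> \<le> \<bar>q * r k z\<bar> + \<bar>\<tau> * K (r k) z\<bar>" by (rule abs_triangle_ineq4)
      also have "\<dots> = q * \<bar>r k z\<bar> + \<tau> * \<bar>K (r k) z\<bar>" using q0 \<tau>0 by (simp add: abs_mult)
      finally show ?thesis .
    qed
    also have "\<dots> \<le> q * (A * q' ^ k) + \<tau> * (c * (q ^ k * nr g))"
    proof (intro add_mono mult_left_mono)
      show "\<bar>r k z\<bar> \<le> A * q' ^ k" by (rule Suc.IH[OF Suc.prems])
      have "\<bar>K (r k) z\<bar> \<le> c * nr (r k)" unfolding c_def by (rule K_nr[OF rc])
      also have "\<dots> \<le> c * (q ^ k * nr g)" by (intro mult_left_mono rnr c0)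
      finally show "\<bar>K (r k) z\<bar> \<le> c * (q ^ k * nr g)" .
    qed (use q0 \<tau>0 in auto)
    also have "\<tau> * (c * (q ^ k * nr g)) = q ^ k * (\<tau> * c * nr g)" by simp
    also have "\<dots> \<le> q' ^ k * ((q' - q) * A)"
      by (rule mult_mono[OF power_mono[OF q'0(1) q0(1)] A1]) (use \<tau>0 c0 gnr q'0 in auto)
    finally show ?case by (simp add: algebra_simps)
  qed
  have summ: "summable (\<lambda>j. A * q' ^ j)" using q'0 by (intro summable_mult summable_geometric) auto
  have summr: "summable (\<lambda>j. r j z)" if "z \<in> {a..b}" for z
    by (rule summable_comparison_test[OF _ summ]) (use rsup that in auto)
  define S where "S = (\<lambda>z. \<Sum>j. r j z)"
  have ul: "uniform_limit {a..b} (\<lambda>n z. \<Sum>j<n. r j z) S sequentially"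
    unfolding S_def by (rule Weierstrass_m_test[OF _ summ]) (use rsup in auto)
  have Sc: "continuous_on {a..b} S"
    by (rule uniform_limit_theorem[OF _ ul]) (auto intro!: always_eventually continuous_intros rc)
  have tail: "\<bar>S z - (\<Sum>j<k. r j z)\<bar> \<le> A / (1 - q') * q' ^ k" if z: "z \<in> {a..b}" for z k
  proof -
    have s1: "summable (\<lambda>j. r (j + k) z)" using summr[OF z] summable_iff_shift[where f="\<lambda>j. r j z" and k=k] by simp
    have s2: "summable (\<lambda>j. A * q' ^ (j + k))" using summ summable_iff_shift[where f="\<lambda>j. A * q' ^ j" and k=k] by simp
    have "S z - (\<Sum>j<k. r j z) = (\<Sum>j. r (j + k) z)"
      unfolding S_def using suminf_split_initial_segment[OF summr[OF z], of k] by simp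
    also have "\<bar>\<dots>\<bar> \<le> (\<Sum>j. A * q' ^ (j + k))"
    proof -
      have s3: "summable (\<lambda>j. \<bar>r (j + k) z\<bar>)"
        by (rule summable_comparison_test[OF _ s2]) (use rsup z in auto)
      have "\<bar>\<Sum>j. r (j + k) z\<bar> \<le> (\<Sum>j. \<bar>r (j + k) z\<bar>)" by (rule summable_rabs[OF s3])
      also have "\<dots> \<le> (\<Sum>j. A * q' ^ (j + k))" by (rule suminf_le[OF _ s3 s2]) (use rsup z in auto)
      finally show ?thesis .
    qed
    also have "(\<Sum>j. A * q' ^ (j + k)) = A * q' ^ k * (\<Sum>j. q' ^ j)"
      by (subst suminf_mult[symmetric]) (use q'0 in \<open>auto simp: power_add mult_ac intro!: summable_geometric\<close>)
    also have "\<dots> = A / (1 - q') * q' ^ k" using q'0 by (simp add: suminf_geometric)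
    finally show ?thesis .
  qed
  define h where "h = (\<lambda>z. - \<tau> * S z)"
  have hc: "continuous_on {a..b} h" unfolding h_def by (intro continuous_intros Sc)
  have ident: "\<alpha> * (- \<tau> * (\<Sum>j<k. r j z)) + (\<Sum>j<k. (- \<tau>) * K (r j) z) - g z = r k z" for k z
  proof (induction k)
    case 0 show ?case by (simp add: r0)
  next
    case (Suc k)
    then show ?case by (simp add: rS q_def algebra_simps)
  qed
  have "\<alpha> * h z + K h z = g z" if z: "z \<in> {a..b}" for z
  proof -
    define E where "E = \<alpha> * h z + K h z - g z"
    have "\<bar>E\<bar> \<le> ((\<alpha> + M\<^sup>2 * (b - a)\<^sup>2) * (\<tau> * (A / (1 - q'))) + A) * q' ^ k" for k
    proof -
      define hk where "hk = (\<lambda>z. \<Sum>j<k. (- \<tau>) * r j z)"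
      have hkc: "continuous_on {a..b} hk" unfolding hk_def by (intro continuous_intros rc)
      have Khk: "K hk z = (\<Sum>j<k. (- \<tau>) * K (r j) z)"
        unfolding hk_def by (rule K_sum) (auto intro: rc)
      have e1: "hk z = - \<tau> * (\<Sum>j<k. r j z)" by (simp add: hk_def sum_distrib_left)
      have id2: "\<alpha> * hk z + K hk z - g z = r k z"
        unfolding Khk e1 by (rule ident)
      have hd: "\<bar>h x - hk x\<bar> \<le> \<tau> * (A / (1 - q') * q' ^ k)" if x: "x \<in> {a..b}" for x
      proof -
        have "h x - hk x = - \<tau> * (S x - (\<Sum>j<k. r j x))"
          by (simp add: h_def hk_def sum_distrib_left algebra_simps)
        then have "\<bar>h x - hk x\<bar> = \<tau> * \<bar>S x - (\<Sum>j<k. r j x)\<bar>" using \<tau>0 by (simp add: abs_mult)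
        also have "\<dots> \<le> \<tau> * (A / (1 - q') * q' ^ k)" using tail[OF x, of k] \<tau>0 by (intro mult_left_mono) auto
        finally show ?thesis .
      qed
      have Kd: "K h z - K hk z = K (\<lambda>x. 1 * h x + (-1) * hk x) z"
        by (subst K_lin[OF hc hkc]) simp
      have Kb: "\<bar>K (\<lambda>x. 1 * h x + (-1) * hk x) z\<bar> \<le> M\<^sup>2 * (b - a)\<^sup>2 * (\<tau> * (A / (1 - q') * q' ^ k))"
        by (rule K_sup) (use hd in \<open>auto intro!: continuous_intros hc hkc\<close>)
      have Eeq: "E = \<alpha> * (h z - hk z) + (K h z - K hk z) + r k z"
        using id2 by (simp add: E_def algebra_simps)
      then have "\<bar>E\<bar> \<le> \<alpha> * \<bar>h z - hk z\<bar> + \<bar>K h z - K hk z\<bar> + \<bar>r k z\<bar>"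
      proof -
        have "\<bar>\<alpha> * (h z - hk z)\<bar> = \<alpha> * \<bar>h z - hk z\<bar>" using \<alpha> by (simp add: abs_mult)
        then show ?thesis unfolding Eeq by linarith
      qed
      also have "\<dots> \<le> \<alpha> * (\<tau> * (A / (1 - q') * q' ^ k)) + M\<^sup>2 * (b - a)\<^sup>2 * (\<tau> * (A / (1 - q') * q' ^ k)) + A * q' ^ k"
        by (intro add_mono mult_left_mono hd z rsup) (use \<alpha> Kd Kb in auto)
      finally show ?thesis by (simp add: algebra_simps)
    qed
    then have "E = 0" by (intro zero_by_geom[of q']) (use q'0 in auto)
    then show ?thesis by (simp add: E_def)
  qed
  then show ?thesis using hc by blast
qed

end


context dc begin

lemma hol2: "\<bar>c\<bar> * \<bar>f x - f y\<bar> \<le> M * \<bar>x - y\<bar> powr s * \<bar>c\<bar>"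
  using mult_left_mono[OF fhol[of x y], of "\<bar>c\<bar>"] by (simp add: mult.commute)

lemma Top_eq: "continuous_on {a..b} u \<Longrightarrow> Top a b f u = Tp u"
proof (rule ext)
  fix y assume u: "continuous_on {a..b} u"
  have "set_integrable lborel {a..b} (\<lambda>z. u z * f (y - z))"
    by (rule borel_integrable_atLeastAtMost'[OF cont_prod1[OF u]])
  then show "Top a b f u y = Tp u y"
    unfolding Top_def Tp_def by (rule set_borel_integral_eq_integral)
qed

lemma Tadj_eq: "continuous_on {a..b} u \<Longrightarrow> Tadj a b f u = Ta u"
proof (rule ext)
  fix y assume u: "continuous_on {a..b} u"
  have "set_integrable lborel {a..b} (\<lambda>z. u z * f (z - y))"
    by (rule borel_integrable_atLeastAtMost'[OF cont_prod2[OF u]])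
  then show "Tadj a b f u y = Ta u y"
    unfolding Tadj_def Ta_def by (rule set_borel_integral_eq_integral)
qed

lemma TT_eq: "continuous_on {a..b} u \<Longrightarrow> Tadj a b f (Top a b f u) = K u"
  by (simp add: Top_eq Tadj_eq Tp_cont' K_def)

lemma norm2_eq: "continuous_on {a..b} u \<Longrightarrow> norm2 a b u = nr u"
proof -
  assume u: "continuous_on {a..b} u"
  have "set_integrable lborel {a..b} (\<lambda>x. (u x)\<^sup>2)"
    by (rule borel_integrable_atLeastAtMost') (intro continuous_intros u)
  then have "(LINT x:{a..b}|lborel. (u x)\<^sup>2) = integral {a..b} (\<lambda>x. (u x)\<^sup>2)"
    by (rule set_borel_integral_eq_integral)
  then show ?thesis unfolding norm2_def nr_def ip_def by (simp add: power2_eq_square)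
qed

definition ext0 :: "(real \<Rightarrow> real) \<Rightarrow> real \<Rightarrow> real" where
  "ext0 h = (\<lambda>z. if z \<in> {a..b} then h z else 0)"

lemma ext0_cont: "continuous_on {a..b} h \<Longrightarrow> continuous_on {a..b} (ext0 h)"
  unfolding ext0_def by (rule continuous_on_eq[of _ h]) auto

lemma ext0_L2: "continuous_on {a..b} h \<Longrightarrow> ext0 h \<in> L2ab a b"
proof -
  assume h: "continuous_on {a..b} h"
  have "(\<lambda>x. indicator {a..b} x *\<^sub>R h x) \<in> borel_measurable borel"
    by (rule borel_measurable_continuous_on_indicator[OF _ h]) auto
  moreover have "(\<lambda>x. indicator {a..b} x *\<^sub>R h x) = ext0 h" by (auto simp: ext0_def indicator_def)
  ultimately have m: "ext0 h \<in> borel_measurable lborel" by simp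
  have "set_integrable lborel {a..b} (\<lambda>x. (ext0 h x)\<^sup>2)"
    by (rule borel_integrable_atLeastAtMost') (intro continuous_intros ext0_cont h)
  with m show ?thesis unfolding L2ab_def by simp
qed

lemma L2_L1:
  assumes "h \<in> L2ab a b"
  shows "integrable lborel (\<lambda>z. indicator {a..b} z * \<bar>h z\<bar>)"
proof (rule Bochner_Integration.integrable_bound)
  have hm: "h \<in> borel_measurable lborel" and i2: "integrable lborel (\<lambda>x. indicator {a..b} x * (h x)\<^sup>2)"
    using assms by (auto simp: L2ab_def set_integrable_def)
  have i1: "integrable lborel (\<lambda>x. indicator {a..b} x * (1::real))"
    by (simp add: emeasure_lborel_Icc_eq)
  show "integrable lborel (\<lambda>x. indicator {a..b} x * (1::real) + indicator {a..b} x * (h x)\<^sup>2)"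
    by (intro Bochner_Integration.integrable_add i1 i2)
  show "(\<lambda>z. indicator {a..b} z * \<bar>h z\<bar>) \<in> borel_measurable lborel" using hm by measurable
  show "AE x in lborel. norm (indicator {a..b} x * \<bar>h x\<bar>) \<le> norm (indicator {a..b} x * (1::real) + indicator {a..b} x * (h x)\<^sup>2)"
  proof (intro AE_I2)
    fix x
    have "\<bar>h x\<bar> \<le> 1 + (h x)\<^sup>2"
    proof -
      have "0 \<le> (\<bar>h x\<bar> - 1)\<^sup>2" by simp
      moreover have "(\<bar>h x\<bar> - 1)\<^sup>2 = (h x)\<^sup>2 - 2 * \<bar>h x\<bar> + 1"
        by (simp add: power2_eq_square algebra_simps)
      ultimately show ?thesis by linarith
    qed
    then show "norm (indicator {a..b} x * \<bar>h x\<bar>) \<le> norm (indicator {a..b} x * (1::real) + indicator {a..b} x * (h x)\<^sup>2)"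
      by (auto simp: indicator_def)
  qed
qed

lemma L2_Top_cont:
  assumes h: "h \<in> L2ab a b"
  shows "continuous_on UNIV (Top a b f h)"
proof -
  have hm: "h \<in> borel_measurable lborel" using h by (simp add: L2ab_def)
  have i1: "integrable lborel (\<lambda>z. indicator {a..b} z * \<bar>h z\<bar>)" by (rule L2_L1[OF h])
  define C where "C = (\<integral>z. indicator {a..b} z * \<bar>h z\<bar> \<partial>lborel)"
  have C0: "0 \<le> C" unfolding C_def by (intro integral_nonneg_AE) (auto simp: indicator_def)
  have iy: "integrable lborel (\<lambda>z. indicator {a..b} z * (h z * f (y - z)))" for y
  proof (rule Bochner_Integration.integrable_bound)
    show "integrable lborel (\<lambda>z. M * (indicator {a..b} z * \<bar>h z\<bar>))" by (intro integrable_mult_right i1)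
    show "(\<lambda>z. indicator {a..b} z * (h z * f (y - z))) \<in> borel_measurable lborel"
      using hm by (intro borel_measurable_times borel_measurable_indicator) (auto intro!: borel_measurable_continuous_onI continuous_intros)
    show "AE z in lborel. norm (indicator {a..b} z * (h z * f (y - z))) \<le> norm (M * (indicator {a..b} z * \<bar>h z\<bar>))"
      using M0 fb2 by (auto simp: indicator_def abs_mult intro!: AE_I2)
  qed
  have "\<bar>Top a b f h y - Top a b f h y'\<bar> \<le> (M * C) * \<bar>y - y'\<bar> powr s" for y y'
  proof -
    have "Top a b f h y - Top a b f h y' = (\<integral>z. indicator {a..b} z * (h z * (f (y - z) - f (y' - z))) \<partial>lborel)"
      unfolding Top_def set_lebesgue_integral_def
      by (simp only: real_scaleR_def, subst Bochner_Integration.integral_diff[symmetric, OF iy iy]) (simp add: algebra_simps)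
    also have "\<bar>\<dots>\<bar> \<le> (\<integral>z. (M * \<bar>y - y'\<bar> powr s) * (indicator {a..b} z * \<bar>h z\<bar>) \<partial>lborel)"
    proof -
      have "\<bar>\<integral>z. indicator {a..b} z * (h z * (f (y - z) - f (y' - z))) \<partial>lborel\<bar>
           \<le> (\<integral>z. norm (indicator {a..b} z * (h z * (f (y - z) - f (y' - z)))) \<partial>lborel)"
        using integral_norm_bound[of lborel "\<lambda>z. indicator {a..b} z * (h z * (f (y - z) - f (y' - z)))"] by (simp only: real_norm_def)
      also have "\<dots> \<le> (\<integral>z. (M * \<bar>y - y'\<bar> powr s) * (indicator {a..b} z * \<bar>h z\<bar>) \<partial>lborel)"
      proof (rule integral_mono)
        show "integrable lborel (\<lambda>z. norm (indicator {a..b} z * (h z * (f (y - z) - f (y' - z)))))"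
        proof -
          have "integrable lborel (\<lambda>z. indicator {a..b} z * (h z * f (y - z)) - indicator {a..b} z * (h z * f (y' - z)))"
            by (intro Bochner_Integration.integrable_diff iy)
          then show ?thesis by (intro integrable_norm) (simp add: algebra_simps)
        qed
        show "integrable lborel (\<lambda>z. M * \<bar>y - y'\<bar> powr s * (indicator {a..b} z * \<bar>h z\<bar>))"
          by (intro integrable_mult_right i1)
        fix z
        show "norm (indicator {a..b} z * (h z * (f (y - z) - f (y' - z)))) \<le> M * \<bar>y - y'\<bar> powr s * (indicator {a..b} z * \<bar>h z\<bar>)"
          using hol2[of "h z" "y - z" "y' - z"] by (auto simp: indicator_def abs_mult)
      qed
      finally show ?thesis .
    qed
    also have "\<dots> = (M * C) * \<bar>y - y'\<bar> powr s" by (simp add: C_def)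
    finally show ?thesis .
  qed
  then show ?thesis by (intro holder_cont[OF s0, of "M * C"]) (use M0 C0 in auto)
qed

lemma uniq_cont:
  assumes \<alpha>: "0 < \<alpha>" and h1: "continuous_on {a..b} h1" and h2: "continuous_on {a..b} h2"
    and e1: "\<And>z. z \<in> {a..b} \<Longrightarrow> \<alpha> * h1 z + K h1 z = g z"
    and e2: "\<And>z. z \<in> {a..b} \<Longrightarrow> \<alpha> * h2 z + K h2 z = g z"
  shows "\<And>z. z \<in> {a..b} \<Longrightarrow> h1 z = h2 z"
proof -
  define d where "d = (\<lambda>z. 1 * h1 z + (-1) * h2 z)"
  have dc: "continuous_on {a..b} d" unfolding d_def by (intro continuous_intros h1 h2)
  have Kd: "K d z = K h1 z - K h2 z" for z unfolding d_def by (subst K_lin[OF h1 h2]) simp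
  have ed: "K d z = (-\<alpha>) * d z" if "z \<in> {a..b}" for z using e1[OF that] e2[OF that] Kd[of z]
    by (simp add: d_def algebra_simps)
  have "ip (Tp d) (Tp d) = ip d (K d)" by (rule P_eq[OF dc])
  also have "\<dots> = ip d (\<lambda>z. (-\<alpha>) * d z)" by (rule ip_cong) (auto simp: ed)
  also have "\<dots> = integral {a..b} (\<lambda>x. (-\<alpha>) * (d x * d x))" unfolding ip_def by (rule integral_cong) (simp add: algebra_simps)
  also have "\<dots> = (-\<alpha>) * ip d d" unfolding ip_def by (rule integral_mult_right)
  also have "\<dots> \<le> 0" using ip_self_nonneg[OF dc] \<alpha> by (simp add: mult_nonneg_nonneg)
  finally have "ip (Tp d) (Tp d) \<le> 0" .
  then have "nr (Tp d) = 0" using ip_self_nonneg[OF Tp_cont_ab[OF dc]] by (simp add: nr_def)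
  then have "K d z = 0" for z using K_pt[OF dc, of z] by simp
  then have "d z = 0" if "z \<in> {a..b}" for z using ed[OF that] \<alpha> by simp
  then show "\<And>z. z \<in> {a..b} \<Longrightarrow> h1 z = h2 z" by (simp add: d_def)
qed

definition Pres :: "real \<Rightarrow> (real \<Rightarrow> real) \<Rightarrow> (real \<Rightarrow> real) \<Rightarrow> bool" where
  "Pres \<alpha> g h \<longleftrightarrow> h \<in> L2ab a b \<and> (\<forall>z. z \<notin> {a..b} \<longrightarrow> h z = 0) \<and>
      (\<forall>z\<in>{a..b}. \<alpha> * h z + Tadj a b f (Top a b f h) z = g z)"

lemma resolvent_Pres: "resolvent a b f \<alpha> g = (THE h. Pres \<alpha> g h)"
  unfolding resolvent_def Pres_def ..

lemma Pres_cont: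
  assumes \<alpha>: "0 < \<alpha>" and g: "continuous_on {a..b} g" and P: "Pres \<alpha> g h"
  shows "continuous_on {a..b} h" "\<And>z. z \<in> {a..b} \<Longrightarrow> \<alpha> * h z + K h z = g z"
proof -
  have hL: "h \<in> L2ab a b" and eq: "\<And>z. z \<in> {a..b} \<Longrightarrow> \<alpha> * h z + Tadj a b f (Top a b f h) z = g z"
    using P by (auto simp: Pres_def)
  have tc: "continuous_on {a..b} (Top a b f h)" using L2_Top_cont[OF hL] continuous_on_subset by blast
  have Te: "Tadj a b f (Top a b f h) = Ta (Top a b f h)" by (rule Tadj_eq[OF tc])
  have "continuous_on {a..b} (\<lambda>z. (g z - Ta (Top a b f h) z) / \<alpha>)"
    by (intro continuous_intros g Ta_cont' tc) (use \<alpha> in auto)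
  then show hc: "continuous_on {a..b} h"
    by (rule continuous_on_eq) (use eq \<alpha> Te in \<open>auto simp: field_simps\<close>)
  show "\<And>z. z \<in> {a..b} \<Longrightarrow> \<alpha> * h z + K h z = g z" using eq TT_eq[OF hc] by simp
qed

lemma Pres_ext0:
  assumes hc: "continuous_on {a..b} h" and e: "\<And>z. z \<in> {a..b} \<Longrightarrow> \<alpha> * h z + K h z = g z"
  shows "Pres \<alpha> g (ext0 h)"
proof -
  have c0: "continuous_on {a..b} (ext0 h)" by (rule ext0_cont[OF hc])
  have "K (ext0 h) = K h" by (rule K_cong) (simp add: ext0_def)
  then show ?thesis unfolding Pres_def using ext0_L2[OF hc] e TT_eq[OF c0]
    by (auto simp: ext0_def)
qed

lemma resolvent_char:
  assumes \<alpha>: "0 < \<alpha>" and g: "continuous_on {a..b} g"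
  shows "Pres \<alpha> g (resolvent a b f \<alpha> g)"
proof -
  obtain h where hc: "continuous_on {a..b} h" and e: "\<forall>z\<in>{a..b}. \<alpha> * h z + K h z = g z"
    using existence[OF \<alpha> g] by blast
  have P0: "Pres \<alpha> g (ext0 h)" by (rule Pres_ext0[OF hc]) (use e in auto)
  have un: "h' = ext0 h" if "Pres \<alpha> g h'" for h'
  proof (rule ext)
    fix z
    show "h' z = ext0 h z"
    proof (cases "z \<in> {a..b}")
      case True
      have c': "continuous_on {a..b} h'" and e': "\<And>z. z \<in> {a..b} \<Longrightarrow> \<alpha> * h' z + K h' z = g z"
        using Pres_cont[OF \<alpha> g that] by auto
      show ?thesis using uniq_cont[OF \<alpha> c' hc e'] e True by (auto simp: ext0_def)
    next
      case False then show ?thesis using that unfolding Pres_def ext0_def by auto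
    qed
  qed
  have "(THE h. Pres \<alpha> g h) = ext0 h" by (rule the_equality[where P="Pres \<alpha> g", OF P0 un])
  then show ?thesis using P0 by (simp add: resolvent_Pres)
qed

lemma resolvent_unique:
  assumes \<alpha>: "0 < \<alpha>" and g: "continuous_on {a..b} g" and hc: "continuous_on {a..b} h"
    and h0: "\<And>z. z \<notin> {a..b} \<Longrightarrow> h z = 0" and e: "\<And>z. z \<in> {a..b} \<Longrightarrow> \<alpha> * h z + K h z = g z"
  shows "resolvent a b f \<alpha> g = h"
proof -
  have P: "Pres \<alpha> g (resolvent a b f \<alpha> g)" by (rule resolvent_char[OF \<alpha> g])
  show ?thesis
  proof (rule ext)
    fix z show "resolvent a b f \<alpha> g z = h z"
    proof (cases "z \<in> {a..b}")
      case True
      show ?thesis using uniq_cont[OF \<alpha> Pres_cont(1)[OF \<alpha> g P] hc Pres_cont(2)[OF \<alpha> g P] e] True by auto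
    next
      case False then show ?thesis using P h0 by (simp add: Pres_def)
    qed
  qed
qed

lemma res_cont: "0 < \<alpha> \<Longrightarrow> continuous_on {a..b} g \<Longrightarrow> continuous_on {a..b} (resolvent a b f \<alpha> g)"
  by (rule Pres_cont(1)[OF _ _ resolvent_char])
lemma res_eq: "0 < \<alpha> \<Longrightarrow> continuous_on {a..b} g \<Longrightarrow> z \<in> {a..b} \<Longrightarrow>
   \<alpha> * resolvent a b f \<alpha> g z + K (resolvent a b f \<alpha> g) z = g z"
  by (rule Pres_cont(2)[OF _ _ resolvent_char])
lemma res_out: "0 < \<alpha> \<Longrightarrow> continuous_on {a..b} g \<Longrightarrow> z \<notin> {a..b} \<Longrightarrow> resolvent a b f \<alpha> g z = 0"
  using resolvent_char[of \<alpha> g] by (simp add: Pres_def)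

end


context dc begin

lemma bdd_cont: "continuous_on {a..b} (h::real\<Rightarrow>real) \<Longrightarrow> bdd_above ((\<lambda>z. \<bar>h z\<bar>) ` {a..b})"
  by (intro bounded_imp_bdd_above compact_imp_bounded compact_continuous_image continuous_intros) auto

lemma sup_upper: "continuous_on {a..b} h \<Longrightarrow> z \<in> {a..b} \<Longrightarrow> \<bar>h z\<bar> \<le> supnorm a b h"
  unfolding supnorm_def by (rule cSUP_upper[OF _ bdd_cont])

lemma sup_least: "(\<And>z. z \<in> {a..b} \<Longrightarrow> \<bar>h z\<bar> \<le> B) \<Longrightarrow> supnorm a b h \<le> B"
  unfolding supnorm_def by (rule cSUP_least) (use ab in auto)

lemma sup_nonneg: "continuous_on {a..b} h \<Longrightarrow> 0 \<le> supnorm a b h"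
  using sup_upper[of h a] ab by auto

lemma res_bound:
  assumes \<alpha>: "0 < \<alpha>" and g: "continuous_on {a..b} g" and z: "z \<in> {a..b}"
  shows "\<bar>resolvent a b f \<alpha> g z\<bar> \<le> (\<bar>g z\<bar> + M * sqrt (b - a) * nr g / (2 * sqrt \<alpha>)) / \<alpha>"
proof -
  define h where "h = resolvent a b f \<alpha> g"
  have hc: "continuous_on {a..b} h" unfolding h_def by (rule res_cont[OF \<alpha> g])
  have he: "\<And>z. z \<in> {a..b} \<Longrightarrow> \<alpha> * h z + K h z = g z" unfolding h_def by (rule res_eq[OF \<alpha> g])
  define x where "x = nr h"
  define y where "y = nr g"
  have x0: "0 \<le> x" unfolding x_def by (rule nr_nonneg[OF hc])
  have y0: "0 \<le> y" unfolding y_def by (rule nr_nonneg[OF g])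
  have "ip (Tp h) (Tp h) = ip h (K h)" by (rule P_eq[OF hc])
  also have "\<dots> = ip h (\<lambda>z. 1 * g z + (- \<alpha>) * h z)" by (rule ip_cong) (use he in \<open>auto simp: algebra_simps\<close>)
  also have "\<dots> = ip h g - \<alpha> * ip h h"
  proof -
    have "ip h (\<lambda>z. 1 * g z + (- \<alpha>) * h z) = integral {a..b} (\<lambda>x. 1 * (h x * g x) + (-\<alpha>) * (h x * h x) + 0 * (h x * h x))"
      unfolding ip_def by (intro integral_cong) (simp add: algebra_simps)
    also have "\<dots> = ip h g - \<alpha> * ip h h"
      unfolding ip_def by (subst int3) (auto intro!: continuous_intros hc g)
    finally show ?thesis .
  qed
  also have "\<dots> \<le> x * y - \<alpha> * x\<^sup>2"
  proof -
    have "ip h g \<le> x * y" using CS[OF hc g] unfolding x_def y_def by linarith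
    moreover have "ip h h = x\<^sup>2" unfolding x_def nr_def using ip_self_nonneg[OF hc] by simp
    ultimately show ?thesis by simp
  qed
  also have "\<dots> \<le> y\<^sup>2 / (4 * \<alpha>)"
  proof -
    have "0 \<le> (2 * \<alpha> * x - y)\<^sup>2" by simp
    then have "0 \<le> 4 * \<alpha>\<^sup>2 * x\<^sup>2 - 4 * \<alpha> * x * y + y\<^sup>2" by (simp add: power2_eq_square algebra_simps)
    then show ?thesis using \<alpha> by (simp add: field_simps power2_eq_square)
  qed
  finally have P: "ip (Tp h) (Tp h) \<le> y\<^sup>2 / (4 * \<alpha>)" .
  have "nr (Tp h) \<le> sqrt (y\<^sup>2 / (4 * \<alpha>))" unfolding nr_def by (rule real_sqrt_le_mono[OF P])
  also have "\<dots> = y / (2 * sqrt \<alpha>)" using y0 \<alpha> by (simp add: real_sqrt_divide real_sqrt_mult)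
  finally have nT: "nr (Tp h) \<le> y / (2 * sqrt \<alpha>)" .
  have "\<bar>K h z\<bar> \<le> M * sqrt (b - a) * nr (Tp h)" by (rule K_pt[OF hc])
  also have "\<dots> \<le> M * sqrt (b - a) * (y / (2 * sqrt \<alpha>))" using nT M0 ab by (intro mult_left_mono) auto
  finally have Kb: "\<bar>K h z\<bar> \<le> M * sqrt (b - a) * y / (2 * sqrt \<alpha>)" by simp
  have "\<alpha> * \<bar>h z\<bar> = \<bar>g z - K h z\<bar>"
  proof -
    have e: "g z - K h z = \<alpha> * h z" using he[OF z] by simp
    show ?thesis unfolding e using \<alpha> by (simp add: abs_mult)
  qed
  also have "\<dots> \<le> \<bar>g z\<bar> + M * sqrt (b - a) * y / (2 * sqrt \<alpha>)" using Kb by linarith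
  finally show ?thesis using \<alpha> unfolding h_def y_def by (simp add: field_simps)
qed

lemma res_supnorm:
  assumes \<alpha>: "0 < \<alpha>" and g: "continuous_on {a..b} g"
  shows "supnorm a b (resolvent a b f \<alpha> g) \<le> (supnorm a b g + M * sqrt (b - a) * nr g / (2 * sqrt \<alpha>)) / \<alpha>"
proof (rule sup_least)
  fix z assume z: "z \<in> {a..b}"
  have "\<bar>resolvent a b f \<alpha> g z\<bar> \<le> (\<bar>g z\<bar> + M * sqrt (b - a) * nr g / (2 * sqrt \<alpha>)) / \<alpha>" by (rule res_bound[OF \<alpha> g z])
  also have "\<dots> \<le> (supnorm a b g + M * sqrt (b - a) * nr g / (2 * sqrt \<alpha>)) / \<alpha>"
    using sup_upper[OF g z] \<alpha> by (intro divide_right_mono add_right_mono) auto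
  finally show "\<bar>resolvent a b f \<alpha> g z\<bar> \<le> \<dots>" .
qed

lemma res_sum:
  assumes \<alpha>: "0 < \<alpha>" and S: "finite S" and G: "\<And>i. i \<in> S \<Longrightarrow> continuous_on {a..b} (G i)"
  shows "resolvent a b f \<alpha> (\<lambda>z. \<Sum>i\<in>S. c i * G i z) = (\<lambda>z. \<Sum>i\<in>S. c i * resolvent a b f \<alpha> (G i) z)"
proof (rule resolvent_unique[OF \<alpha>])
  show "continuous_on {a..b} (\<lambda>z. \<Sum>i\<in>S. c i * G i z)" by (intro continuous_intros G)
  have Rc: "\<And>i. i \<in> S \<Longrightarrow> continuous_on {a..b} (resolvent a b f \<alpha> (G i))" by (rule res_cont[OF \<alpha> G])
  show "continuous_on {a..b} (\<lambda>z. \<Sum>i\<in>S. c i * resolvent a b f \<alpha> (G i) z)" by (intro continuous_intros Rc)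
  show "\<And>z. z \<notin> {a..b} \<Longrightarrow> (\<Sum>i\<in>S. c i * resolvent a b f \<alpha> (G i) z) = 0"
    using res_out[OF \<alpha> G] by simp
  fix z assume z: "z \<in> {a..b}"
  have "K (\<lambda>z. \<Sum>i\<in>S. c i * resolvent a b f \<alpha> (G i) z) z = (\<Sum>i\<in>S. c i * K (resolvent a b f \<alpha> (G i)) z)"
    by (rule K_sum[OF S Rc])
  then show "\<alpha> * (\<Sum>i\<in>S. c i * resolvent a b f \<alpha> (G i) z) + K (\<lambda>z. \<Sum>i\<in>S. c i * resolvent a b f \<alpha> (G i) z) z
      = (\<Sum>i\<in>S. c i * G i z)"
  proof -
    have e: "G i z = \<alpha> * resolvent a b f \<alpha> (G i) z + K (resolvent a b f \<alpha> (G i)) z" if "i \<in> S" for i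
      using res_eq[OF \<alpha> G[OF that] z] by simp
    have "(\<Sum>i\<in>S. c i * G i z) = (\<Sum>i\<in>S. \<alpha> * (c i * resolvent a b f \<alpha> (G i) z) + c i * K (resolvent a b f \<alpha> (G i)) z)"
      by (rule sum.cong) (auto simp: e algebra_simps)
    then show ?thesis unfolding \<open>K _ z = _\<close> by (simp add: sum.distrib sum_distrib_left)
  qed
qed

lemma res_lin2:
  assumes \<alpha>: "0 < \<alpha>" and u: "continuous_on {a..b} u" and v: "continuous_on {a..b} v"
  shows "resolvent a b f \<alpha> (\<lambda>z. c * u z + d * v z) = (\<lambda>z. c * resolvent a b f \<alpha> u z + d * resolvent a b f \<alpha> v z)"
proof (rule resolvent_unique[OF \<alpha>])
  have Ru: "continuous_on {a..b} (resolvent a b f \<alpha> u)" by (rule res_cont[OF \<alpha> u])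
  have Rv: "continuous_on {a..b} (resolvent a b f \<alpha> v)" by (rule res_cont[OF \<alpha> v])
  show "continuous_on {a..b} (\<lambda>z. c * u z + d * v z)" by (intro continuous_intros u v)
  show "continuous_on {a..b} (\<lambda>z. c * resolvent a b f \<alpha> u z + d * resolvent a b f \<alpha> v z)" by (intro continuous_intros Ru Rv)
  show "\<And>z. z \<notin> {a..b} \<Longrightarrow> c * resolvent a b f \<alpha> u z + d * resolvent a b f \<alpha> v z = 0"
    using res_out[OF \<alpha> u] res_out[OF \<alpha> v] by simp
  fix z assume z: "z \<in> {a..b}"
  show "\<alpha> * (c * resolvent a b f \<alpha> u z + d * resolvent a b f \<alpha> v z) + K (\<lambda>z. c * resolvent a b f \<alpha> u z + d * resolvent a b f \<alpha> v z) z
     = c * u z + d * v z"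
  proof -
    have e1: "u z = \<alpha> * resolvent a b f \<alpha> u z + K (resolvent a b f \<alpha> u) z" using res_eq[OF \<alpha> u z] by simp
    have e2: "v z = \<alpha> * resolvent a b f \<alpha> v z + K (resolvent a b f \<alpha> v) z" using res_eq[OF \<alpha> v z] by simp
    show ?thesis unfolding K_lin[OF Ru Rv, of c d z] by (subst e1, subst e2) (simp add: algebra_simps)
  qed
qed

definition Phi :: "real \<Rightarrow> real \<Rightarrow> real \<Rightarrow> real" where
  "Phi \<alpha> y z = resolvent a b f \<alpha> (\<lambda>z. f (y - z)) z"

lemma fy_cont: "continuous_on S (\<lambda>z. f (y - z))" by (intro continuous_intros)

lemma Phi_holder:
  assumes \<alpha>: "0 < \<alpha>"
  shows "\<bar>Phi \<alpha> y z - Phi \<alpha> y' z\<bar> \<le> ((M + M * sqrt (b - a) * (sqrt (b - a) * M) / (2 * sqrt \<alpha>)) / \<alpha>) * \<bar>y - y'\<bar> powr s"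
proof (cases "z \<in> {a..b}")
  case False
  then show ?thesis using res_out[OF \<alpha> fy_cont] M0 ab \<alpha> by (simp add: Phi_def)
next
  case z: True
  define g where "g = (\<lambda>z. 1 * f (y - z) + (-1) * f (y' - z))"
  have gc: "continuous_on {a..b} g" unfolding g_def by (intro continuous_intros)
  have gb: "\<bar>g x\<bar> \<le> M * \<bar>y - y'\<bar> powr s" for x using fhol[of "y - x" "y' - x"] by (simp add: g_def)
  have "Phi \<alpha> y z - Phi \<alpha> y' z = resolvent a b f \<alpha> g z"
    unfolding Phi_def g_def res_lin2[OF \<alpha> fy_cont fy_cont] by simp
  also have "\<bar>\<dots>\<bar> \<le> (\<bar>g z\<bar> + M * sqrt (b - a) * nr g / (2 * sqrt \<alpha>)) / \<alpha>" by (rule res_bound[OF \<alpha> gc z])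
  also have "\<dots> \<le> (M * \<bar>y - y'\<bar> powr s + M * sqrt (b - a) * (sqrt (b - a) * (M * \<bar>y - y'\<bar> powr s)) / (2 * sqrt \<alpha>)) / \<alpha>"
    using gb nr_le_sup[OF gc gb] M0 ab \<alpha>
    by (intro divide_right_mono add_mono mult_left_mono divide_right_mono) auto
  also have "\<dots> = ((M + M * sqrt (b - a) * (sqrt (b - a) * M) / (2 * sqrt \<alpha>)) / \<alpha>) * \<bar>y - y'\<bar> powr s"
    by (simp add: field_simps)
  finally show ?thesis .
qed

lemma Phi_cont: "0 < \<alpha> \<Longrightarrow> continuous_on UNIV (\<lambda>y. Phi \<alpha> y z)"
  by (rule holder_cont[OF s0 _ Phi_holder]) (use M0 ab in auto)

lemma Phi_meas[measurable]: "0 < \<alpha> \<Longrightarrow> (\<lambda>y. Phi \<alpha> y z) \<in> borel_measurable borel"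
  using Phi_cont borel_measurable_continuous_onI by blast

lemma Phi_zcont: "0 < \<alpha> \<Longrightarrow> continuous_on {a..b} (Phi \<alpha> y)"
  unfolding Phi_def[abs_def] by (rule res_cont[OF _ fy_cont])

end


context dc begin

definition DD :: "real set" where "DD = {a..b} \<inter> \<rat>"

lemma DD_countable: "countable DD" unfolding DD_def
  by (rule countable_subset[OF _ countable_rat]) auto

lemma DD_ne: "DD \<noteq> {}"
proof -
  obtain q where "q \<in> \<rat>" "a < q" "q < b" using Rats_dense_in_real[OF ab] by blast
  then have "q \<in> DD" unfolding DD_def by auto
  then show ?thesis by auto
qed

lemma DD_closure: "{a..b} \<subseteq> closure DD"
proof
  fix z assume z: "z \<in> {a..b}"
  show "z \<in> closure DD" unfolding closure_approachable
  proof (intro allI impI)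
    fix e :: real assume e: "0 < e"
    show "\<exists>y\<in>DD. dist y z < e"
    proof (cases "z < b")
      case True
      obtain q where "q \<in> \<rat>" "z < q" "q < min (z + e) b" using Rats_dense_in_real[of z "min (z+e) b"] True e by auto
      then show ?thesis using z by (intro bexI[of _ q]) (auto simp: DD_def dist_real_def)
    next
      case False
      then have zb: "z = b" using z by auto
      obtain q where "q \<in> \<rat>" "max a (b - e) < q" "q < b" using Rats_dense_in_real[of "max a (b - e)" b] ab e by auto
      then show ?thesis using zb by (intro bexI[of _ q]) (auto simp: DD_def dist_real_def)
    qed
  qed
qed

lemma supnorm_dense:
  assumes h: "continuous_on {a..b} h"
  shows "supnorm a b h = (SUP z\<in>DD. \<bar>h z\<bar>)"
proof (rule antisym)
  have bddD: "bdd_above ((\<lambda>z. \<bar>h z\<bar>) ` DD)"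
    using bdd_cont[OF h] by (rule bdd_above_mono) (auto simp: DD_def)
  show "supnorm a b h \<le> (SUP z\<in>DD. \<bar>h z\<bar>)"
  proof (rule sup_least)
    fix z assume z: "z \<in> {a..b}"
    have cl: "closure DD \<subseteq> {a..b}" by (rule closure_minimal) (auto simp: DD_def)
    have "continuous_on (closure DD) (\<lambda>z. \<bar>h z\<bar>)"
      by (rule continuous_on_subset[OF _ cl]) (intro continuous_intros h)
    then show "\<bar>h z\<bar> \<le> (SUP z\<in>DD. \<bar>h z\<bar>)"
      by (rule continuous_le_on_closure) (use DD_closure z bddD in \<open>auto intro: cSUP_upper\<close>)
  qed
  show "(SUP z\<in>DD. \<bar>h z\<bar>) \<le> supnorm a b h"
    unfolding supnorm_def by (rule cSUP_subset_mono[OF DD_ne bdd_cont[OF h]]) (auto simp: DD_def)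
qed

lemma supnorm_meas:
  fixes F :: "'b \<Rightarrow> real \<Rightarrow> real"
  assumes c: "\<And>\<omega>. continuous_on {a..b} (F \<omega>)" and m: "\<And>z. (\<lambda>\<omega>. F \<omega> z) \<in> borel_measurable N"
  shows "(\<lambda>\<omega>. supnorm a b (F \<omega>)) \<in> borel_measurable N"
proof -
  have "(\<lambda>\<omega>. SUP z\<in>DD. \<bar>F \<omega> z\<bar>) \<in> borel_measurable N"
  proof (rule borel_measurable_cSUP[OF DD_countable])
    fix z show "(\<lambda>\<omega>. \<bar>F \<omega> z\<bar>) \<in> borel_measurable N" using m[of z] by measurable
  next
    fix \<omega> show "bdd_above ((\<lambda>z. \<bar>F \<omega> z\<bar>) ` DD)"
      using bdd_cont[OF c] by (rule bdd_above_mono) (auto simp: DD_def)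
  qed
  then show ?thesis by (simp add: supnorm_dense[OF c])
qed

lemma f_meas[measurable]: "f \<in> borel_measurable borel"
  using fcont borel_measurable_continuous_onI by blast

end

locale dcm = dc a b M s f + prob_space P for a b M s f and P :: "'a measure" +
  fixes Y e :: "nat \<Rightarrow> 'a \<Rightarrow> real"
  assumes Ym[measurable]: "\<And>i. Y i \<in> borel_measurable P"
  assumes em[measurable]: "\<And>i. e i \<in> borel_measurable P"
begin

definition gfun :: "nat \<Rightarrow> 'a \<Rightarrow> real \<Rightarrow> real" where
  "gfun n \<omega> = (\<lambda>z. (1 / real n) * (\<Sum>i<n. e i \<omega> * f (Y i \<omega> - z)))"

lemma gfun_cont: "continuous_on S (gfun n \<omega>)"
  unfolding gfun_def by (intro continuous_intros)

lemma gfun_meas[measurable]: "(\<lambda>\<omega>. gfun n \<omega> z) \<in> borel_measurable P"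
  unfolding gfun_def by measurable

lemma gfun_meas2[measurable]: "(\<lambda>(\<omega>, z). gfun n \<omega> z) \<in> borel_measurable (P \<Otimes>\<^sub>M lborel)"
  unfolding gfun_def by measurable

lemma sup_g_meas[measurable]: "(\<lambda>\<omega>. supnorm a b (gfun n \<omega>)) \<in> borel_measurable P"
  by (rule supnorm_meas[OF gfun_cont gfun_meas])

lemma nr_g_meas[measurable]: "(\<lambda>\<omega>. nr (gfun n \<omega>)) \<in> borel_measurable P"
proof -
  have "(\<lambda>\<omega>. norm2 a b (gfun n \<omega>)) \<in> borel_measurable P"
    unfolding norm2_def set_lebesgue_integral_def by measurable
  then show ?thesis by (simp add: norm2_eq[OF gfun_cont])
qed

lemma nu_repr:
  assumes \<alpha>: "0 < \<alpha>"
  shows "resolvent a b f \<alpha> (gfun n \<omega>) = (\<lambda>z. \<Sum>i<n. (e i \<omega> / real n) * Phi \<alpha> (Y i \<omega>) z)"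
proof -
  have eqg: "gfun n \<omega> = (\<lambda>z. \<Sum>i<n. (e i \<omega> / real n) * f (Y i \<omega> - z))"
    unfolding gfun_def by (simp add: sum_distrib_left)
  have "resolvent a b f \<alpha> (\<lambda>z. \<Sum>i<n. (e i \<omega> / real n) * f (Y i \<omega> - z)) =
      (\<lambda>z. \<Sum>i<n. (e i \<omega> / real n) * resolvent a b f \<alpha> (\<lambda>z. f (Y i \<omega> - z)) z)"
    by (rule res_sum[OF \<alpha>]) (auto simp: fy_cont)
  then show ?thesis unfolding Phi_def eqg .
qed

lemma sup_nu_meas:
  assumes \<alpha>: "0 < \<alpha>"
  shows "(\<lambda>\<omega>. supnorm a b (resolvent a b f \<alpha> (gfun n \<omega>))) \<in> borel_measurable P"
proof -
  have "(\<lambda>\<omega>. supnorm a b (\<lambda>z. \<Sum>i<n. (e i \<omega> / real n) * Phi \<alpha> (Y i \<omega>) z)) \<in> borel_measurable P"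
  proof (rule supnorm_meas)
    fix \<omega> show "continuous_on {a..b} (\<lambda>z. \<Sum>i<n. e i \<omega> / real n * Phi \<alpha> (Y i \<omega>) z)"
      by (intro continuous_intros Phi_zcont \<alpha>)
    fix z show "(\<lambda>\<omega>. \<Sum>i<n. e i \<omega> / real n * Phi \<alpha> (Y i \<omega>) z) \<in> borel_measurable P"
      using Phi_meas[OF \<alpha>] by measurable
  qed
  then show ?thesis by (simp add: nu_repr[OF \<alpha>])
qed

end


locale dcp = dcm +
  assumes ebd: "\<And>i \<omega>. \<bar>e i \<omega>\<bar> \<le> 1"
  assumes emean: "\<And>i. expectation (e i) = 0"
  assumes indep: "indep_vars (\<lambda>_. borel) (\<lambda>k. case k of Inl i \<Rightarrow> Y i | Inr i \<Rightarrow> e i) UNIV"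
begin

abbreviation XX where "XX \<equiv> (\<lambda>k. case k of Inl i \<Rightarrow> Y i | Inr i \<Rightarrow> e i)"

lemma Z_indep: "indep_vars (\<lambda>_. borel) (\<lambda>i \<omega>. e i \<omega> * f (Y i \<omega> - z)) UNIV"
proof -
  have r: "indep_vars (\<lambda>j. PiM {Inl j, Inr j} (\<lambda>_. borel)) (\<lambda>j \<omega>. restrict (\<lambda>k. XX k \<omega>) {Inl j, Inr j}) UNIV"
    by (rule indep_vars_restrict[OF indep]) (auto simp: disjoint_family_on_def)
  have c: "indep_vars (\<lambda>_. borel) (\<lambda>j \<omega>. (\<lambda>x. x (Inr j) * f (x (Inl j) - z)) (restrict (\<lambda>k. XX k \<omega>) {Inl j, Inr j})) UNIV"
    by (rule indep_vars_compose2[OF r]) measurable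
  show ?thesis by (rule indep_vars_cong[THEN iffD1, OF _ _ _ c]) auto
qed

lemma Y_e_indep: "indep_var borel (e i) borel (\<lambda>\<omega>. f (Y i \<omega> - z))"
proof -
  have r: "indep_var (PiM {Inr i} (\<lambda>_. borel)) (\<lambda>\<omega>. restrict (\<lambda>k. XX k \<omega>) {Inr i})
                     (PiM {Inl i} (\<lambda>_. borel)) (\<lambda>\<omega>. restrict (\<lambda>k. XX k \<omega>) {Inl i})"
    by (rule indep_var_restrict[OF indep]) auto
  have "indep_var borel ((\<lambda>x. x (Inr i)) \<circ> (\<lambda>\<omega>. restrict (\<lambda>k. XX k \<omega>) {Inr i}))
                   borel ((\<lambda>x. f (x (Inl i) - z)) \<circ> (\<lambda>\<omega>. restrict (\<lambda>k. XX k \<omega>) {Inl i}))"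
    by (rule indep_var_compose[OF r]) measurable
  also have "((\<lambda>x. x (Inr i)) \<circ> (\<lambda>\<omega>. restrict (\<lambda>k. XX k \<omega>) {Inr i})) = e i" by (auto simp: fun_eq_iff)
  also have "((\<lambda>x. f (x (Inl i) - z)) \<circ> (\<lambda>\<omega>. restrict (\<lambda>k. XX k \<omega>) {Inl i})) = (\<lambda>\<omega>. f (Y i \<omega> - z))" by (auto simp: fun_eq_iff)
  finally show ?thesis .
qed

lemma bnd_int: "(X :: 'a \<Rightarrow> real) \<in> borel_measurable P \<Longrightarrow> (\<And>\<omega>. \<bar>X \<omega>\<bar> \<le> B) \<Longrightarrow> integrable P X"
  by (rule integrable_const_bound[where B=B]) auto

lemma Z_bd: "\<bar>e i \<omega> * f (Y i \<omega> - z)\<bar> \<le> M"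
proof -
  have "\<bar>e i \<omega> * f (Y i \<omega> - z)\<bar> = \<bar>e i \<omega>\<bar> * \<bar>f (Y i \<omega> - z)\<bar>" by (simp add: abs_mult)
  also have "\<dots> \<le> 1 * M" by (intro mult_mono ebd fbd) auto
  finally show ?thesis by simp
qed

lemma Z_int: "integrable P (\<lambda>\<omega>. e i \<omega> * f (Y i \<omega> - z))"
  by (rule bnd_int[OF _ Z_bd]) measurable

lemma Z_mean: "expectation (\<lambda>\<omega>. e i \<omega> * f (Y i \<omega> - z)) = 0"
proof -
  have "expectation (\<lambda>\<omega>. e i \<omega> * f (Y i \<omega> - z)) = expectation (e i) * expectation (\<lambda>\<omega>. f (Y i \<omega> - z))"
  proof (rule indep_var_lebesgue_integral[OF Y_e_indep])
    show "integrable P (e i)" by (rule bnd_int[OF _ ebd]) simp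
    show "integrable P (\<lambda>\<omega>. f (Y i \<omega> - z))" by (rule bnd_int[OF _ fbd]) measurable
  qed
  then show ?thesis by (simp add: emean)
qed

lemma Z_sq:
  "expectation (\<lambda>\<omega>. (\<Sum>i<n. e i \<omega> * f (Y i \<omega> - z))\<^sup>2) \<le> real n * M\<^sup>2"
proof -
  define Z where "Z = (\<lambda>i \<omega>. e i \<omega> * f (Y i \<omega> - z))"
  have Zm[measurable]: "Z i \<in> borel_measurable P" for i unfolding Z_def by measurable
  have Zi: "integrable P (Z i)" for i unfolding Z_def by (rule Z_int)
  have Zb: "\<bar>Z i \<omega>\<bar> \<le> M" for i \<omega> unfolding Z_def by (rule Z_bd)
  have ZZi: "integrable P (\<lambda>\<omega>. Z i \<omega> * Z j \<omega>)" for i j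
    by (rule bnd_int[where B="M * M"]) (use M0 in \<open>auto simp: abs_mult intro!: mult_mono Zb\<close>)
  have cross: "expectation (\<lambda>\<omega>. Z i \<omega> * Z j \<omega>) = 0" if "i \<noteq> j" for i j
  proof -
    have ind: "indep_vars (\<lambda>_. borel) Z {i, j}"
      by (rule indep_vars_subset[OF Z_indep[of z, folded Z_def]]) auto
    have "expectation (\<lambda>\<omega>. \<Prod>k\<in>{i,j}. Z k \<omega>) = (\<Prod>k\<in>{i,j}. expectation (Z k))"
      by (rule indep_vars_lebesgue_integral[OF _ ind]) (auto intro: Zi)
    then show ?thesis using that by (simp add: Z_def Z_mean)
  qed
  have diag: "expectation (\<lambda>\<omega>. Z i \<omega> * Z i \<omega>) \<le> M\<^sup>2" for i
  proof -
    have "expectation (\<lambda>\<omega>. Z i \<omega> * Z i \<omega>) \<le> expectation (\<lambda>\<omega>. M\<^sup>2)"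
    proof (rule integral_mono[OF ZZi])
      show "integrable P (\<lambda>\<omega>. M\<^sup>2)" by simp
      fix \<omega>
      have "\<bar>Z i \<omega>\<bar>\<^sup>2 \<le> M\<^sup>2" by (rule power_mono[OF Zb abs_ge_zero])
      then show "Z i \<omega> * Z i \<omega> \<le> M\<^sup>2" by (simp add: power2_eq_square)
    qed
    then show ?thesis by (simp add: prob_space)
  qed
  have "expectation (\<lambda>\<omega>. (\<Sum>i<n. Z i \<omega>)\<^sup>2) = expectation (\<lambda>\<omega>. \<Sum>i<n. \<Sum>j<n. Z i \<omega> * Z j \<omega>)"
    by (simp add: power2_eq_square sum_product)
  also have "\<dots> = (\<Sum>i<n. \<Sum>j<n. expectation (\<lambda>\<omega>. Z i \<omega> * Z j \<omega>))"
    by (simp add: Bochner_Integration.integral_sum ZZi)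
  also have "\<dots> = (\<Sum>i<n. expectation (\<lambda>\<omega>. Z i \<omega> * Z i \<omega>))"
  proof (rule sum.cong[OF refl])
    fix i assume i: "i \<in> {..<n}"
    have "(\<Sum>j<n. expectation (\<lambda>\<omega>. Z i \<omega> * Z j \<omega>)) = (\<Sum>j\<in>{i}. expectation (\<lambda>\<omega>. Z i \<omega> * Z j \<omega>))"
      by (rule sum.mono_neutral_right) (use i cross in auto)
    then show "(\<Sum>j<n. expectation (\<lambda>\<omega>. Z i \<omega> * Z j \<omega>)) = expectation (\<lambda>\<omega>. Z i \<omega> * Z i \<omega>)" by simp
  qed
  also have "\<dots> \<le> (\<Sum>i<n. M\<^sup>2)" by (rule sum_mono) (rule diag)
  finally show ?thesis by (simp add: Z_def)
qed

lemma Z_hoeff: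
  assumes t: "0 \<le> t" and n: "0 < n"
  shows "prob {\<omega>\<in>space P. \<bar>\<Sum>i<n. e i \<omega> * f (Y i \<omega> - z)\<bar> \<ge> t} \<le> 2 * exp (- 2 * t\<^sup>2 / (real n * (2 * M)\<^sup>2))"
proof -
  interpret H: Hoeffding_ineq P "{..<n}" "\<lambda>i \<omega>. e i \<omega> * f (Y i \<omega> - z)" "\<lambda>_. - M" "\<lambda>_. M"
     "\<Sum>i<n. expectation (\<lambda>\<omega>. e i \<omega> * f (Y i \<omega> - z))"
  proof unfold_locales
    show "indep_vars (\<lambda>_. borel) (\<lambda>i \<omega>. e i \<omega> * f (Y i \<omega> - z)) {..<n}"
      by (rule indep_vars_subset[OF Z_indep]) auto
    fix i show "AE x in P. e i x * f (Y i x - z) \<in> {- M..M}"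
    proof (rule AE_I2)
      fix x show "e i x * f (Y i x - z) \<in> {- M..M}" using Z_bd[of i x z] by (auto simp: abs_le_iff)
    qed
  qed auto
  have pos: "(\<Sum>i<n. (M - - M)\<^sup>2) > 0" using n M0 by simp
  have "prob {\<omega>\<in>space P. \<bar>(\<Sum>i<n. e i \<omega> * f (Y i \<omega> - z)) - (\<Sum>i<n. expectation (\<lambda>\<omega>. e i \<omega> * f (Y i \<omega> - z)))\<bar> \<ge> t}
      \<le> 2 * exp (- 2 * t\<^sup>2 / (\<Sum>i<n. (M - - M)\<^sup>2))"
    by (rule H.Hoeffding_ineq_abs_ge[OF t pos])
  then show ?thesis by (simp add: Z_mean)
qed

lemma gfun_bd: "\<bar>gfun n \<omega> z\<bar> \<le> M"
proof (cases "n = 0")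
  case True then show ?thesis using M0 by (simp add: gfun_def)
next
  case False
  have "\<bar>\<Sum>i<n. e i \<omega> * f (Y i \<omega> - z)\<bar> \<le> (\<Sum>i<n. \<bar>e i \<omega> * f (Y i \<omega> - z)\<bar>)" by (rule sum_abs)
  also have "\<dots> \<le> (\<Sum>i<n. M)" by (rule sum_mono) (rule Z_bd)
  finally have "\<bar>\<Sum>i<n. e i \<omega> * f (Y i \<omega> - z)\<bar> \<le> real n * M" by simp
  then show ?thesis using False by (simp add: gfun_def abs_mult field_simps)
qed

lemma gfun_hol: "\<bar>gfun n \<omega> z - gfun n \<omega> z'\<bar> \<le> M * \<bar>z - z'\<bar> powr s"
proof (cases "n = 0")
  case True then show ?thesis using M0 by (simp add: gfun_def)
next
  case False
  have "\<bar>(\<Sum>i<n. e i \<omega> * f (Y i \<omega> - z)) - (\<Sum>i<n. e i \<omega> * f (Y i \<omega> - z'))\<bar>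
       = \<bar>\<Sum>i<n. e i \<omega> * (f (Y i \<omega> - z) - f (Y i \<omega> - z'))\<bar>"
    by (simp add: sum_subtractf[symmetric] algebra_simps)
  also have "\<dots> \<le> (\<Sum>i<n. \<bar>e i \<omega> * (f (Y i \<omega> - z) - f (Y i \<omega> - z'))\<bar>)" by (rule sum_abs)
  also have "\<dots> \<le> (\<Sum>i<n. M * \<bar>z - z'\<bar> powr s)"
  proof (rule sum_mono)
    fix i
    have "\<bar>e i \<omega> * (f (Y i \<omega> - z) - f (Y i \<omega> - z'))\<bar> = \<bar>e i \<omega>\<bar> * \<bar>f (Y i \<omega> - z) - f (Y i \<omega> - z')\<bar>"
      by (simp add: abs_mult)
    also have "\<dots> \<le> 1 * (M * \<bar>(Y i \<omega> - z) - (Y i \<omega> - z')\<bar> powr s)" by (intro mult_mono ebd fhol) auto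
    finally show "\<bar>e i \<omega> * (f (Y i \<omega> - z) - f (Y i \<omega> - z'))\<bar> \<le> M * \<bar>z - z'\<bar> powr s"
      by (simp add: abs_minus_commute)
  qed
  finally have "\<bar>(\<Sum>i<n. e i \<omega> * f (Y i \<omega> - z)) - (\<Sum>i<n. e i \<omega> * f (Y i \<omega> - z'))\<bar> \<le> real n * (M * \<bar>z - z'\<bar> powr s)"
    by simp
  then show ?thesis using False
    by (simp add: gfun_def right_diff_distrib[symmetric] abs_mult field_simps)
qed

lemma grid_exists:
  assumes N: "0 < N" and z: "z \<in> {a..b}"
  shows "\<exists>j\<le>N. \<bar>z - (a + real j * ((b - a) / real N))\<bar> \<le> (b - a) / real N"
proof -
  define \<delta> where "\<delta> = (b - a) / real N"
  have \<delta>: "0 < \<delta>" unfolding \<delta>_def using ab N by simp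
  define x where "x = (z - a) / \<delta>"
  have x0: "0 \<le> x" unfolding x_def using z \<delta> by simp
  have xN: "x \<le> real N" unfolding x_def \<delta>_def using z ab N by (simp add: field_simps)
  define j where "j = nat \<lfloor>x\<rfloor>"
  have j1: "real j \<le> x" "x < real j + 1" unfolding j_def using x0 by linarith+
  have jN: "j \<le> N" using j1 xN by linarith
  have "z - (a + real j * \<delta>) = \<delta> * (x - real j)" unfolding x_def using \<delta> by (simp add: field_simps)
  then have "\<bar>z - (a + real j * \<delta>)\<bar> \<le> \<delta>" using j1 \<delta> by (simp add: abs_mult)
  then show ?thesis using jN unfolding \<delta>_def by blast
qed

lemma sup_g_int: "integrable P (\<lambda>\<omega>. supnorm a b (gfun n \<omega>))"
  by (rule bnd_int[where B=M]) (use sup_nonneg[OF gfun_cont] in \<open>auto intro!: sup_least gfun_bd\<close>)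

lemma sup_g_bound:
  assumes n: "0 < n" and N: "0 < N" and t: "0 \<le> t"
  shows "expectation (\<lambda>\<omega>. supnorm a b (gfun n \<omega>)) \<le>
    t + M * ((b - a) / real N) powr s + M * (real (N + 1) * (2 * exp (- 2 * (real n * t)\<^sup>2 / (real n * (2 * M)\<^sup>2))))"
proof -
  define \<delta> where "\<delta> = (b - a) / real N"
  define zj where "zj j = a + real j * \<delta>" for j
  define A where "A j = {\<omega>\<in>space P. real n * t \<le> \<bar>\<Sum>i<n. e i \<omega> * f (Y i \<omega> - zj j)\<bar>}" for j
  define AA where "AA = (\<Union>j\<in>{..N}. A j)"
  have Am: "A j \<in> sets P" for j unfolding A_def by measurable
  have AAm: "AA \<in> sets P" unfolding AA_def using Am by auto
  have pt: "supnorm a b (gfun n \<omega>) \<le> t + M * \<delta> powr s + M * indicator AA \<omega>" if \<omega>: "\<omega> \<in> space P" for \<omega>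
  proof (rule sup_least)
    fix z assume z: "z \<in> {a..b}"
    obtain j where j: "j \<le> N" "\<bar>z - zj j\<bar> \<le> \<delta>" using grid_exists[OF N z] unfolding zj_def \<delta>_def by blast
    have "\<bar>gfun n \<omega> z - gfun n \<omega> (zj j)\<bar> \<le> M * \<bar>z - zj j\<bar> powr s" by (rule gfun_hol)
    also have "\<dots> \<le> M * \<delta> powr s" using j M0 s0 by (intro mult_left_mono powr_mono2) auto
    finally have d: "\<bar>gfun n \<omega> z\<bar> \<le> \<bar>gfun n \<omega> (zj j)\<bar> + M * \<delta> powr s" by linarith
    show "\<bar>gfun n \<omega> z\<bar> \<le> t + M * \<delta> powr s + M * indicator AA \<omega>"
    proof (cases "\<omega> \<in> AA")
      case True
      have nn: "0 \<le> M * \<delta> powr s" using M0 by simp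
      have i1: "indicator AA \<omega> = (1::real)" using True by simp
      show ?thesis unfolding i1 using nn gfun_bd[of n \<omega> z] t by linarith
    next
      case False
      then have "\<omega> \<notin> A j" using j unfolding AA_def by auto
      then have "\<bar>\<Sum>i<n. e i \<omega> * f (Y i \<omega> - zj j)\<bar> < real n * t" using \<omega> unfolding A_def by auto
      then have "\<bar>gfun n \<omega> (zj j)\<bar> < t" using n by (simp add: gfun_def abs_mult field_simps)
      then show ?thesis using d False by (simp add: indicator_def)
    qed
  qed
  have "expectation (\<lambda>\<omega>. supnorm a b (gfun n \<omega>)) \<le> expectation (\<lambda>\<omega>. t + M * \<delta> powr s + M * indicator AA \<omega>)"
  proof (rule integral_mono_AE[OF sup_g_int])
    have im: "indicator AA \<in> borel_measurable P" using AAm by simp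
    show "integrable P (\<lambda>\<omega>. t + M * \<delta> powr s + M * indicator AA \<omega>)"
    proof (rule bnd_int[where B="\<bar>t\<bar> + \<bar>M * \<delta> powr s\<bar> + \<bar>M\<bar>"])
      show "(\<lambda>\<omega>. t + M * \<delta> powr s + M * indicator AA \<omega>) \<in> borel_measurable P"
        by (intro borel_measurable_add borel_measurable_const borel_measurable_times im)
      fix \<omega>
      have h: "\<bar>M * indicator AA \<omega>\<bar> \<le> \<bar>M\<bar>" by (simp add: abs_mult indicator_def)
      show "\<bar>t + M * \<delta> powr s + M * indicator AA \<omega>\<bar> \<le> \<bar>t\<bar> + \<bar>M * \<delta> powr s\<bar> + \<bar>M\<bar>"
        using abs_triangle_ineq[of "t + M * \<delta> powr s" "M * indicator AA \<omega>"] abs_triangle_ineq[of t "M * \<delta> powr s"] h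
        by linarith
    qed
    show "AE \<omega> in P. supnorm a b (gfun n \<omega>) \<le> t + M * \<delta> powr s + M * indicator AA \<omega>"
      using pt by (auto intro!: AE_I2)
  qed
  also have "\<dots> = t + M * \<delta> powr s + M * prob AA"
  proof -
    have im: "indicator AA \<in> borel_measurable P" using AAm by simp
    have ii: "integrable P (\<lambda>\<omega>. M * indicator AA \<omega>)"
    proof (rule bnd_int[where B="\<bar>M\<bar>"])
      show "(\<lambda>\<omega>. M * indicator AA \<omega>) \<in> borel_measurable P" by (intro borel_measurable_times borel_measurable_const im)
    qed (auto simp: abs_mult indicator_def)
    have "expectation (\<lambda>\<omega>. t + M * \<delta> powr s + M * indicator AA \<omega>) =
        expectation (\<lambda>\<omega>. t + M * \<delta> powr s) + expectation (\<lambda>\<omega>. M * indicator AA \<omega>)"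
      by (rule Bochner_Integration.integral_add[OF _ ii]) simp
    also have "expectation (\<lambda>\<omega>. M * indicator AA \<omega>) = M * expectation (indicator AA)"
    proof (rule Bochner_Integration.integral_mult_right)
      show "integrable P (indicator AA :: 'a \<Rightarrow> real)"
        by (rule bnd_int[where B=1, OF im]) (auto simp: indicator_def)
    qed
    also have "expectation (indicator AA) = prob AA"
      using AAm by (simp add: sets.Int_space_eq2)
    finally show ?thesis by (simp add: prob_space)
  qed
  also have "prob AA \<le> (\<Sum>j\<le>N. prob (A j))"
    unfolding AA_def by (rule finite_measure_subadditive_finite) (use Am in auto)
  also have "\<dots> \<le> (\<Sum>j\<le>N. 2 * exp (- 2 * (real n * t)\<^sup>2 / (real n * (2 * M)\<^sup>2)))"
    unfolding A_def by (rule sum_mono, rule Z_hoeff) (use n t in auto)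
  finally show ?thesis using M0 by (simp add: \<delta>_def mult_left_mono)
qed

end


context dcp begin

lemma g_sq: "0 < n \<Longrightarrow> expectation (\<lambda>\<omega>. (gfun n \<omega> z)\<^sup>2) \<le> M\<^sup>2 / real n"
proof -
  assume n: "0 < n"
  have "expectation (\<lambda>\<omega>. (gfun n \<omega> z)\<^sup>2) = expectation (\<lambda>\<omega>. (1 / real n)\<^sup>2 * (\<Sum>i<n. e i \<omega> * f (Y i \<omega> - z))\<^sup>2)"
    unfolding gfun_def power_mult_distrib ..
  also have "\<dots> = (1 / real n)\<^sup>2 * expectation (\<lambda>\<omega>. (\<Sum>i<n. e i \<omega> * f (Y i \<omega> - z))\<^sup>2)"
    by (rule integral_mult_right_zero)
  also have "\<dots> \<le> (1 / real n)\<^sup>2 * (real n * M\<^sup>2)" by (intro mult_left_mono Z_sq) auto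
  also have "\<dots> = M\<^sup>2 / real n" using n by (simp add: power2_eq_square field_simps)
  finally show ?thesis .
qed

lemma ind_int: "integrable lborel (\<lambda>z. indicator {a..b} z * (c::real))"
proof -
  have "set_integrable lborel {a..b} (\<lambda>z. c)" by (rule borel_integrable_atLeastAtMost') simp
  then show ?thesis by (simp add: set_integrable_def)
qed

lemma ind_integral: "(\<integral>z. indicator {a..b} z * (c::real) \<partial>lborel) = (b - a) * c"
proof -
  have "set_integrable lborel {a..b} (\<lambda>z. c)" by (rule borel_integrable_atLeastAtMost') simp
  from set_borel_integral_eq_integral(2)[OF this] have "(LINT z:{a..b}|lborel. c) = integral {a..b} (\<lambda>z. c)" .
  then show ?thesis using ab by (simp add: set_lebesgue_integral_def)
qed

lemma F_int: "integrable lborel (\<lambda>z. indicator {a..b} z * (gfun n \<omega> z)\<^sup>2)"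
proof -
  have "set_integrable lborel {a..b} (\<lambda>z. (gfun n \<omega> z)\<^sup>2)"
    by (rule borel_integrable_atLeastAtMost') (intro continuous_intros gfun_cont)
  then show ?thesis by (simp add: set_integrable_def)
qed

lemma nr_sq_eq: "(nr (gfun n \<omega>))\<^sup>2 = (\<integral>z. indicator {a..b} z * (gfun n \<omega> z)\<^sup>2 \<partial>lborel)"
proof -
  have nn: "0 \<le> (\<integral>z. indicator {a..b} z * (gfun n \<omega> z)\<^sup>2 \<partial>lborel)"
    by (rule integral_nonneg_AE) (auto simp: indicator_def)
  have "nr (gfun n \<omega>) = sqrt (\<integral>z. indicator {a..b} z * (gfun n \<omega> z)\<^sup>2 \<partial>lborel)"
    unfolding norm2_eq[OF gfun_cont, symmetric] norm2_def set_lebesgue_integral_def by simp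
  then show ?thesis using nn by simp
qed

lemma nr_g_bd: "0 \<le> nr (gfun n \<omega>) \<and> nr (gfun n \<omega>) \<le> sqrt (b - a) * M"
  using nr_nonneg[OF gfun_cont] nr_le_sup[OF gfun_cont gfun_bd] by auto

lemma E_nr_sq:
  assumes n: "0 < n"
  shows "expectation (\<lambda>\<omega>. (nr (gfun n \<omega>))\<^sup>2) \<le> (b - a) * (M\<^sup>2 / real n)"
proof -
  interpret PL: pair_sigma_finite P lborel ..
  define F where "F = (\<lambda>\<omega> z. indicator {a..b} z * (gfun n \<omega> z)\<^sup>2)"
  have Fm[measurable]: "(\<lambda>(\<omega>, z). F \<omega> z) \<in> borel_measurable (P \<Otimes>\<^sub>M lborel)"
    unfolding F_def by measurable
  have Fm': "(\<lambda>p. F (fst p) (snd p)) \<in> borel_measurable (P \<Otimes>\<^sub>M lborel)"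
    using Fm by (simp add: case_prod_beta')
  have Fi: "integrable lborel (F \<omega>)" for \<omega> unfolding F_def by (rule F_int)
  have Fb: "\<bar>F \<omega> z\<bar> \<le> indicator {a..b} z * M\<^sup>2" for \<omega> z
  proof -
    have "\<bar>gfun n \<omega> z\<bar>\<^sup>2 \<le> M\<^sup>2" by (rule power_mono[OF gfun_bd abs_ge_zero])
    then show ?thesis unfolding F_def by (auto simp: indicator_def abs_mult)
  qed
  have prodint: "integrable (P \<Otimes>\<^sub>M lborel) (\<lambda>(\<omega>, z). F \<omega> z)"
  proof (rule PL.Fubini_integrable)
    show "(\<lambda>(\<omega>, z). F \<omega> z) \<in> borel_measurable (P \<Otimes>\<^sub>M lborel)" by (rule Fm)
    show "AE \<omega> in P. integrable lborel (\<lambda>z. case (\<omega>, z) of (\<omega>, z) \<Rightarrow> F \<omega> z)"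
      using Fi by simp
    show "integrable P (\<lambda>\<omega>. \<integral>z. norm (case (\<omega>, z) of (\<omega>, z) \<Rightarrow> F \<omega> z) \<partial>lborel)"
    proof (rule bnd_int[where B="(b - a) * M\<^sup>2"])
      show "(\<lambda>\<omega>. \<integral>z. norm (case (\<omega>, z) of (\<omega>, z) \<Rightarrow> F \<omega> z) \<partial>lborel) \<in> borel_measurable P"
        by measurable
      fix \<omega>
      have "(\<integral>z. norm (F \<omega> z) \<partial>lborel) \<le> (\<integral>z. indicator {a..b} z * M\<^sup>2 \<partial>lborel)"
        by (rule integral_mono[OF integrable_norm[OF Fi] ind_int]) (use Fb in auto)
      moreover have "0 \<le> (\<integral>z. norm (F \<omega> z) \<partial>lborel)" by (rule integral_nonneg_AE) auto
      ultimately show "\<bar>\<integral>z. norm (case (\<omega>, z) of (\<omega>, z) \<Rightarrow> F \<omega> z) \<partial>lborel\<bar> \<le> (b - a) * M\<^sup>2"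
        using ab by (simp add: ind_integral)
    qed
  qed
  have "expectation (\<lambda>\<omega>. (nr (gfun n \<omega>))\<^sup>2) = (\<integral>\<omega>. (\<integral>z. F \<omega> z \<partial>lborel) \<partial>P)"
    by (simp add: nr_sq_eq F_def)
  also have "\<dots> = (\<integral>z. (\<integral>\<omega>. F \<omega> z \<partial>P) \<partial>lborel)"
    by (rule PL.Fubini_integral[symmetric, OF prodint])
  also have "\<dots> \<le> (\<integral>z. indicator {a..b} z * (M\<^sup>2 / real n) \<partial>lborel)"
  proof (rule integral_mono[OF PL.integrable_snd[OF prodint] ind_int])
    fix z
    have "(\<integral>\<omega>. F \<omega> z \<partial>P) = indicator {a..b} z * expectation (\<lambda>\<omega>. (gfun n \<omega> z)\<^sup>2)"
      unfolding F_def by (rule integral_mult_right_zero)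
    also have "\<dots> \<le> indicator {a..b} z * (M\<^sup>2 / real n)"
      by (intro mult_left_mono g_sq n) auto
    finally show "(\<integral>\<omega>. F \<omega> z \<partial>P) \<le> indicator {a..b} z * (M\<^sup>2 / real n)" .
  qed
  also have "\<dots> = (b - a) * (M\<^sup>2 / real n)" by (rule ind_integral)
  finally show ?thesis .
qed

lemma nr_int: "integrable P (\<lambda>\<omega>. nr (gfun n \<omega>))"
  by (rule bnd_int[where B="sqrt (b - a) * M"]) (use nr_g_bd in auto)

lemma E_nr:
  assumes n: "0 < n"
  shows "expectation (\<lambda>\<omega>. nr (gfun n \<omega>)) \<le> M * sqrt (b - a) / sqrt (real n)"
proof -
  define c where "c = M * sqrt (b - a) / sqrt (real n)"
  have c0: "0 < c" unfolding c_def using M0 ab n by simp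
  have c2: "c\<^sup>2 = (b - a) * (M\<^sup>2 / real n)" unfolding c_def using ab n by (simp add: power_divide power_mult_distrib)
  have sq_int: "integrable P (\<lambda>\<omega>. (nr (gfun n \<omega>))\<^sup>2)"
  proof (rule bnd_int[where B="(sqrt (b - a) * M)\<^sup>2"])
    fix \<omega> show "\<bar>(nr (gfun n \<omega>))\<^sup>2\<bar> \<le> (sqrt (b - a) * M)\<^sup>2"
      using nr_g_bd[of n \<omega>] by (simp add: power_mono)
  qed measurable
  have "expectation (\<lambda>\<omega>. nr (gfun n \<omega>)) \<le> expectation (\<lambda>\<omega>. (1 / (2 * c)) * (nr (gfun n \<omega>))\<^sup>2 + c / 2)"
  proof (rule integral_mono[OF nr_int])
    show "integrable P (\<lambda>\<omega>. 1 / (2 * c) * (nr (gfun n \<omega>))\<^sup>2 + c / 2)"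
      by (intro Bochner_Integration.integrable_add integrable_mult_right sq_int) simp
    fix \<omega>
    have "0 \<le> (nr (gfun n \<omega>) - c)\<^sup>2" by simp
    then have "2 * c * nr (gfun n \<omega>) \<le> (nr (gfun n \<omega>))\<^sup>2 + c\<^sup>2" by (simp add: power2_eq_square algebra_simps)
    then show "nr (gfun n \<omega>) \<le> 1 / (2 * c) * (nr (gfun n \<omega>))\<^sup>2 + c / 2"
      using c0 by (simp add: field_simps power2_eq_square)
  qed
  also have "\<dots> = (1 / (2 * c)) * expectation (\<lambda>\<omega>. (nr (gfun n \<omega>))\<^sup>2) + c / 2"
    by (simp add: Bochner_Integration.integral_add sq_int prob_space)
  also have "\<dots> \<le> (1 / (2 * c)) * c\<^sup>2 + c / 2"
    using E_nr_sq[OF n] c0 c2 by (intro add_right_mono mult_left_mono) auto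
  also have "\<dots> = c" using c0 by (simp add: power2_eq_square field_simps)
  finally show ?thesis unfolding c_def .
qed

lemma nu_int_bound:
  assumes \<alpha>: "0 < \<alpha>" and n: "0 < n"
  shows "integrable P (\<lambda>\<omega>. supnorm a b (resolvent a b f \<alpha> (gfun n \<omega>)))"
    "expectation (\<lambda>\<omega>. supnorm a b (resolvent a b f \<alpha> (gfun n \<omega>))) \<le>
       (expectation (\<lambda>\<omega>. supnorm a b (gfun n \<omega>)) + M * sqrt (b - a) * (M * sqrt (b - a) / sqrt (real n)) / (2 * sqrt \<alpha>)) / \<alpha>"
proof -
  have pt: "supnorm a b (resolvent a b f \<alpha> (gfun n \<omega>)) \<le> (supnorm a b (gfun n \<omega>) + M * sqrt (b - a) * nr (gfun n \<omega>) / (2 * sqrt \<alpha>)) / \<alpha>" for \<omega>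
    by (rule res_supnorm[OF \<alpha> gfun_cont])
  have sg: "0 \<le> supnorm a b (gfun n \<omega>) \<and> supnorm a b (gfun n \<omega>) \<le> M" for \<omega>
    using sup_nonneg[OF gfun_cont] sup_least[OF gfun_bd] by auto
  have rhs_int: "integrable P (\<lambda>\<omega>. (supnorm a b (gfun n \<omega>) + M * sqrt (b - a) * nr (gfun n \<omega>) / (2 * sqrt \<alpha>)) / \<alpha>)"
    by (intro integrable_divide Bochner_Integration.integrable_add sup_g_int integrable_mult_right nr_int)
  show int: "integrable P (\<lambda>\<omega>. supnorm a b (resolvent a b f \<alpha> (gfun n \<omega>)))"
  proof (rule bnd_int[where B="(M + M * sqrt (b - a) * (sqrt (b - a) * M) / (2 * sqrt \<alpha>)) / \<alpha>"])
    show "(\<lambda>\<omega>. supnorm a b (resolvent a b f \<alpha> (gfun n \<omega>))) \<in> borel_measurable P" by (rule sup_nu_meas[OF \<alpha>])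
    fix \<omega>
    have "0 \<le> supnorm a b (resolvent a b f \<alpha> (gfun n \<omega>))" by (rule sup_nonneg[OF res_cont[OF \<alpha> gfun_cont]])
    moreover have "(supnorm a b (gfun n \<omega>) + M * sqrt (b - a) * nr (gfun n \<omega>) / (2 * sqrt \<alpha>)) / \<alpha>
        \<le> (M + M * sqrt (b - a) * (sqrt (b - a) * M) / (2 * sqrt \<alpha>)) / \<alpha>"
      using sg[of \<omega>] nr_g_bd[of n \<omega>] \<alpha> M0 ab
      by (intro divide_right_mono add_mono divide_right_mono mult_left_mono) auto
    ultimately show "\<bar>supnorm a b (resolvent a b f \<alpha> (gfun n \<omega>))\<bar> \<le> (M + M * sqrt (b - a) * (sqrt (b - a) * M) / (2 * sqrt \<alpha>)) / \<alpha>"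
      using pt[of \<omega>] by simp
  qed
  have "expectation (\<lambda>\<omega>. supnorm a b (resolvent a b f \<alpha> (gfun n \<omega>)))
     \<le> expectation (\<lambda>\<omega>. (supnorm a b (gfun n \<omega>) + M * sqrt (b - a) * nr (gfun n \<omega>) / (2 * sqrt \<alpha>)) / \<alpha>)"
    by (rule integral_mono[OF int rhs_int pt])
  also have "\<dots> = (expectation (\<lambda>\<omega>. supnorm a b (gfun n \<omega>)) + M * sqrt (b - a) * expectation (\<lambda>\<omega>. nr (gfun n \<omega>)) / (2 * sqrt \<alpha>)) / \<alpha>"
    by (simp add: Bochner_Integration.integral_add sup_g_int nr_int integrable_mult_right)
  also have "\<dots> \<le> (expectation (\<lambda>\<omega>. supnorm a b (gfun n \<omega>)) + M * sqrt (b - a) * (M * sqrt (b - a) / sqrt (real n)) / (2 * sqrt \<alpha>)) / \<alpha>"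
    using E_nr[OF n] \<alpha> M0 ab by (intro divide_right_mono add_left_mono mult_left_mono) auto
  finally show "expectation (\<lambda>\<omega>. supnorm a b (resolvent a b f \<alpha> (gfun n \<omega>))) \<le> \<dots>" .
qed

end


lemma f_end_zero:
  fixes f :: "real \<Rightarrow> real"
  assumes c: "continuous_on UNIV f" and z: "\<forall>y. y \<notin> {a..b} \<longrightarrow> f y = 0"
  shows "f b = 0" "f a = 0"
proof -
  have t1: "(f \<longlongrightarrow> f b) (at_right b)"
    using c by (meson UNIV_I continuous_on_def tendsto_within_subset subset_UNIV)
  have t2: "(f \<longlongrightarrow> 0) (at_right b)"
    by (rule tendsto_eventually) (use z in \<open>auto simp: eventually_at_right_field intro!: exI[of _ "b + 1"]\<close>)
  show "f b = 0" using tendsto_unique[OF _ t1 t2] by simp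
  have t3: "(f \<longlongrightarrow> f a) (at_left a)"
    using c by (meson UNIV_I continuous_on_def tendsto_within_subset subset_UNIV)
  have t4: "(f \<longlongrightarrow> 0) (at_left a)"
    by (rule tendsto_eventually) (use z in \<open>auto simp: eventually_at_left_field intro!: exI[of _ "a - 1"]\<close>)
  show "f a = 0" using tendsto_unique[OF _ t3 t4] by simp
qed

lemma dc_from_assms:
  fixes f :: "real \<Rightarrow> real"
  assumes ab: "a < b" and s: "0 < s"
    and fint: "(\<integral>y. f y \<partial>lborel) = 1"
    and c: "continuous_on UNIV f"
    and z: "\<forall>y. y \<notin> {a..b} \<longrightarrow> f y = 0"
    and hb: "\<forall>y\<in>{a..b}. \<bar>f y\<bar> \<le> M"
    and hh: "\<forall>x\<in>{a..b}. \<forall>y\<in>{a..b}. \<bar>f x - f y\<bar> \<le> M * \<bar>x - y\<bar> powr s"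
  shows "dc a b M s f"
proof -
  have M0: "0 < M"
  proof (rule ccontr)
    assume "\<not> 0 < M"
    then have "f y = 0" for y using hb z by (cases "y \<in> {a..b}") force+
    then have "(\<integral>y. f y \<partial>lborel) = 0" by simp
    then show False using fint by simp
  qed
  have fb: "\<bar>f y\<bar> \<le> M" for y using hb z M0 by (cases "y \<in> {a..b}") auto
  have fa0: "f a = 0" and fb0: "f b = 0" using f_end_zero[OF c z] by auto
  have one: "\<bar>f x - f y\<bar> \<le> M * \<bar>x - y\<bar> powr s" if x: "x \<in> {a..b}" and y: "y \<notin> {a..b}" for x y
  proof (cases "y > b")
    case True
    have "\<bar>f x - f y\<bar> = \<bar>f x - f b\<bar>" using z y fb0 by simp
    also have "\<dots> \<le> M * \<bar>x - b\<bar> powr s" by (rule hh[rule_format]) (use x ab in auto)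
    also have "\<dots> \<le> M * \<bar>x - y\<bar> powr s" using x True M0 s by (intro mult_left_mono powr_mono2) auto
    finally show ?thesis .
  next
    case False
    then have ya: "y < a" using y by auto
    have "\<bar>f x - f y\<bar> = \<bar>f x - f a\<bar>" using z y fa0 by simp
    also have "\<dots> \<le> M * \<bar>x - a\<bar> powr s" by (rule hh[rule_format]) (use x ab in auto)
    also have "\<dots> \<le> M * \<bar>x - y\<bar> powr s" using x ya M0 s by (intro mult_left_mono powr_mono2) auto
    finally show ?thesis .
  qed
  have hol: "\<bar>f x - f y\<bar> \<le> M * \<bar>x - y\<bar> powr s" for x y
  proof (cases "x \<in> {a..b}"; cases "y \<in> {a..b}")
    assume "x \<in> {a..b}" "y \<in> {a..b}" then show ?thesis using hh by auto
  next
    assume "x \<in> {a..b}" "y \<notin> {a..b}" then show ?thesis by (rule one)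
  next
    assume "x \<notin> {a..b}" "y \<in> {a..b}" then show ?thesis using one[of y x] by (simp add: abs_minus_commute)
  next
    assume "x \<notin> {a..b}" "y \<notin> {a..b}" then show ?thesis using z M0 by simp
  qed
  show ?thesis by unfold_locales (use ab s M0 c fb hol in auto)
qed

context dcp begin

lemma sup_g_final:
  assumes n: "0 < n" and m: "1 \<le> real m * s"
  shows "expectation (\<lambda>\<omega>. supnorm a b (gfun n \<omega>)) \<le>
     M * sqrt (2 * ln (2 * (real (n ^ m) + 1) * real n) / real n) + M * (b - a) powr s / real n + M / real n"
proof -
  define N where "N = n ^ m"
  have N0: "0 < N" unfolding N_def using n by simp
  define L where "L = 2 * (real N + 1) * real n"
  have L1: "1 \<le> L"
  proof -
    have "1 * 1 \<le> (2 * (real N + 1)) * real n" by (rule mult_mono) (use n in auto)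
    then show ?thesis unfolding L_def by simp
  qed
  have lnL: "0 \<le> ln L" using L1 by simp
  define t where "t = M * sqrt (2 * ln L / real n)"
  have t0: "0 \<le> t" unfolding t_def using M0 lnL by simp
  have "expectation (\<lambda>\<omega>. supnorm a b (gfun n \<omega>)) \<le>
    t + M * ((b - a) / real N) powr s + M * (real (N + 1) * (2 * exp (- 2 * (real n * t)\<^sup>2 / (real n * (2 * M)\<^sup>2))))"
    by (rule sup_g_bound[OF n N0 t0])
  also have "- 2 * (real n * t)\<^sup>2 / (real n * (2 * M)\<^sup>2) = - ln L"
  proof -
    have "(real n * t)\<^sup>2 = (real n)\<^sup>2 * M\<^sup>2 * (2 * ln L / real n)"
      unfolding t_def using lnL n by (simp add: power_mult_distrib)
    then show ?thesis using n M0 by (simp add: field_simps power2_eq_square)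
  qed
  also have "M * (real (N + 1) * (2 * exp (- ln L))) = M / real n"
    using L1 n by (simp add: exp_minus L_def field_simps)
  also have "((b - a) / real N) powr s \<le> (b - a) powr s / real n"
  proof -
    have "((b - a) / real N) powr s = (b - a) powr s / real N powr s"
      using ab N0 by (simp add: powr_divide)
    also have "real N powr s = real n powr (real m * s)"
      unfolding N_def using n by (simp add: powr_realpow[symmetric] powr_powr)
    also have "real n powr (real m * s) \<ge> real n powr 1"
      using n m by (intro powr_mono) auto
    then have "(b - a) powr s / real n powr (real m * s) \<le> (b - a) powr s / real n powr 1"
      using n by (intro divide_left_mono) auto
    finally show ?thesis using n by simp
  qed
  then have "M * ((b - a) / real N) powr s \<le> M * ((b - a) powr s / real n)"
    using M0 by (intro mult_left_mono) auto
  then have "M * ((b - a) / real N) powr s \<le> M * (b - a) powr s / real n" by simp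
  finally show ?thesis unfolding t_def L_def N_def by simp
qed

lemma nu_final:
  assumes \<alpha>: "0 < \<alpha>" "\<alpha> \<le> 1" and n: "1 \<le> n" and aln: "\<alpha> * ln (real n) \<le> 5"
    and m: "1 \<le> real m * s"
  shows "expectation (\<lambda>\<omega>. supnorm a b (resolvent a b f \<alpha> (gfun n \<omega>))) \<le>
     (M * sqrt (2 * (ln 4 + 5 * (real m + 1))) + M * ((b - a) powr s + 1) + M\<^sup>2 * (b - a) / 2) / (\<alpha> powr (3/2) * sqrt (real n))"
proof -
  have n0: "0 < n" using n by simp
  define r where "r = sqrt \<alpha>"
  define q where "q = sqrt (real n)"
  have r0: "0 < r" "r \<le> 1" unfolding r_def using \<alpha> by auto
  have q1: "1 \<le> q" unfolding q_def using n by simp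
  have rr: "r * r = \<alpha>" unfolding r_def using \<alpha> by simp
  have qq: "q * q = real n" unfolding q_def by simp
  have a32: "\<alpha> powr (3/2) = \<alpha> * r"
  proof -
    have "\<alpha> powr (3/2) = \<alpha> powr 1 * \<alpha> powr (1/2)" by (subst powr_add[symmetric]) simp
    then show ?thesis unfolding r_def using \<alpha> by (simp add: powr_half_sqrt)
  qed
  define L where "L = 2 * (real (n ^ m) + 1) * real n"
  define X1 where "X1 = M * sqrt (2 * (ln 4 + 5 * (real m + 1)))"
  define X2 where "X2 = M * ((b - a) powr s + 1)"
  define X3 where "X3 = M\<^sup>2 * (b - a) / 2"
  have lnn: "0 \<le> ln (real n)" using n by simp
  have lnL: "ln L \<le> ln 4 + (real m + 1) * ln (real n)"
  proof -
    have nm: "1 \<le> real (n ^ m)" using n by simp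
    have "L \<le> 2 * (2 * real (n ^ m)) * real n" unfolding L_def using nm n by (intro mult_right_mono mult_left_mono) auto
    also have "\<dots> = 4 * real n ^ (m + 1)" by simp
    finally have LL: "L \<le> 4 * real n ^ (m + 1)" .
    have p1: "0 < real n ^ m + 1" by (simp add: add_nonneg_pos)
    have Lp: "0 < L" unfolding L_def using n p1 by simp
    have "ln L \<le> ln (4 * real n ^ (m + 1))" by (rule ln_mono[OF LL Lp])
    also have "\<dots> = ln 4 + real (m + 1) * ln (real n)" using n by (simp add: ln_mult ln_realpow algebra_simps)
    finally show ?thesis by (simp add: add.commute)
  qed
  have L1: "1 \<le> L"
  proof -
    have "1 * 1 \<le> (2 * (real (n ^ m) + 1)) * real n" by (rule mult_mono) (use n in auto)
    then show ?thesis unfolding L_def by simp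
  qed
  have aL: "\<alpha> * ln L \<le> ln 4 + 5 * (real m + 1)"
  proof -
    have "\<alpha> * ln L \<le> \<alpha> * (ln 4 + (real m + 1) * ln (real n))" using lnL \<alpha> by (intro mult_left_mono) auto
    also have "\<dots> = \<alpha> * ln 4 + (real m + 1) * (\<alpha> * ln (real n))" by (simp add: algebra_simps)
    also have "\<dots> \<le> 1 * ln 4 + (real m + 1) * 5"
      using \<alpha> aln by (intro add_mono mult_left_mono mult_right_mono) auto
    finally show ?thesis by simp
  qed
  have S: "expectation (\<lambda>\<omega>. supnorm a b (gfun n \<omega>)) \<le> (X1 + X2) / (r * q)"
  proof -
    have e0: "expectation (\<lambda>\<omega>. supnorm a b (gfun n \<omega>)) \<le> M * sqrt (2 * ln L / real n) + M * (b - a) powr s / real n + M / real n"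
      unfolding L_def by (rule sup_g_final[OF n0 m])
    have e1: "M * sqrt (2 * ln L / real n) = M * sqrt (2 * (\<alpha> * ln L)) / (r * q)"
    proof -
      have "sqrt (2 * (\<alpha> * ln L)) = r * sqrt (2 * ln L)" unfolding r_def by (simp add: real_sqrt_mult)
      moreover have "sqrt (2 * ln L / real n) = sqrt (2 * ln L) / q" unfolding q_def by (simp add: real_sqrt_divide)
      ultimately show ?thesis using r0 q1 by (simp add: field_simps)
    qed
    have e2: "M * sqrt (2 * (\<alpha> * ln L)) / (r * q) \<le> X1 / (r * q)"
      unfolding X1_def using aL M0 r0 q1 by (intro divide_right_mono mult_left_mono real_sqrt_le_mono) auto
    have e3: "M * (b - a) powr s / real n + M / real n = X2 / real n" unfolding X2_def by (simp add: add_divide_distrib algebra_simps)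
    have e4: "X2 / real n \<le> X2 / (r * q)"
    proof (rule divide_left_mono)
      show "0 \<le> X2" unfolding X2_def using M0 by simp
      have "r * q \<le> 1 * q" using r0 q1 by (intro mult_right_mono) auto
      also have "\<dots> \<le> q * q" using q1 by simp
      finally show "r * q \<le> real n" using qq by simp
      show "0 < real n * (r * q)" using n r0 q1 by simp
    qed
    have "(X1 + X2) / (r * q) = X1 / (r * q) + X2 / (r * q)" by (simp add: add_divide_distrib)
    then show ?thesis using e0 e1 e2 e3 e4 by linarith
  qed
  have "expectation (\<lambda>\<omega>. supnorm a b (resolvent a b f \<alpha> (gfun n \<omega>))) \<le>
     (expectation (\<lambda>\<omega>. supnorm a b (gfun n \<omega>)) + M * sqrt (b - a) * (M * sqrt (b - a) / sqrt (real n)) / (2 * sqrt \<alpha>)) / \<alpha>"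
    by (rule nu_int_bound(2)[OF \<alpha>(1) n0])
  also have "M * sqrt (b - a) * (M * sqrt (b - a) / sqrt (real n)) / (2 * sqrt \<alpha>) = X3 / (r * q)"
    unfolding X3_def r_def q_def using ab by (simp add: power2_eq_square field_simps)
  also have "(expectation (\<lambda>\<omega>. supnorm a b (gfun n \<omega>)) + X3 / (r * q)) / \<alpha> \<le> ((X1 + X2) / (r * q) + X3 / (r * q)) / \<alpha>"
    using S \<alpha> by (intro divide_right_mono add_right_mono) auto
  also have "\<dots> = (X1 + X2 + X3) / (\<alpha> powr (3/2) * sqrt (real n))"
    unfolding a32 using r0 q1 \<alpha> by (simp add: q_def[symmetric] field_simps)
  finally show ?thesis unfolding X1_def X2_def X3_def .
qed

end


lemma ev_aln:
  fixes \<alpha> :: "nat \<Rightarrow> real"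
  assumes a0: "\<forall>n. 0 < \<alpha> n" and a1: "\<alpha> \<longlonglongrightarrow> 0"
    and a2: "(\<lambda>n. \<alpha> n powr (3/2 + min \<beta> 1) * sqrt (real n)) \<longlonglongrightarrow> 0" and beta: "0 < \<beta>"
  shows "eventually (\<lambda>n. \<alpha> n * ln (real n) \<le> 5) sequentially"
proof -
  have e1: "eventually (\<lambda>n. \<alpha> n < 1) sequentially" using order_tendstoD(2)[OF a1] by simp
  have e2: "eventually (\<lambda>n. \<alpha> n powr (3/2 + min \<beta> 1) * sqrt (real n) < 1) sequentially"
    using order_tendstoD(2)[OF a2] by simp
  have e3: "eventually (\<lambda>n. 1 \<le> n) sequentially" by (rule eventually_ge_at_top)
  show ?thesis using e1 e2 e3
  proof eventually_elim
    case (elim n)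
    define x where "x = \<alpha> n"
    have x0: "0 < x" "x \<le> 1" using a0 elim unfolding x_def by auto
    have n1: "1 \<le> real n" using elim by simp
    have "x powr (5/2) \<le> x powr (3/2 + min \<beta> 1)" using x0 by (intro powr_mono') auto
    then have "x powr (5/2) * sqrt (real n) \<le> x powr (3/2 + min \<beta> 1) * sqrt (real n)"
      by (rule mult_right_mono) simp
    then have "x powr (5/2) * sqrt (real n) < 1" using elim(2) unfolding x_def by linarith
    then have "x powr (5/2) \<le> 1 / sqrt (real n)" using n1 by (simp add: field_simps)
    also have "\<dots> = real n powr (- (1/2))" using n1 by (simp only: powr_minus_divide powr_half_sqrt)
    finally have h1: "x powr (5/2) \<le> real n powr (- (1/2))" .
    have "x = (x powr (5/2)) powr (2/5)" using x0 by (simp add: powr_powr)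
    also have "\<dots> \<le> (real n powr (- (1/2))) powr (2/5)" by (rule powr_mono2) (use h1 in auto)
    also have "\<dots> = real n powr (- (1/5))" by (simp add: powr_powr)
    finally have hx: "x \<le> real n powr (- (1/5))" .
    have lnn: "0 \<le> ln (real n)" using n1 by simp
    have "ln (real n) = 5 * ln (real n powr (1/5))" using n1 by (simp add: ln_powr)
    also have "\<dots> \<le> 5 * real n powr (1/5)" using n1 by (intro mult_left_mono ln_bound) auto
    finally have hl: "ln (real n) \<le> 5 * real n powr (1/5)" .
    have "x * ln (real n) \<le> real n powr (- (1/5)) * ln (real n)" by (rule mult_right_mono[OF hx lnn])
    also have "\<dots> \<le> real n powr (- (1/5)) * (5 * real n powr (1/5))" by (intro mult_left_mono hl) auto
    also have "\<dots> = 5 * (real n powr (- (1/5)) * real n powr (1/5))" by simp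
    also have "real n powr (- (1/5)) * real n powr (1/5) = 1" using n1 by (simp add: powr_add[symmetric])
    finally show ?case unfolding x_def by simp
  qed
qed

theorem corollary5:
  fixes a b M s \<beta> C :: real
    and f \<phi> :: "real \<Rightarrow> real"
    and \<alpha> :: "nat \<Rightarrow> real"
    and M\<^sub>P :: "'a measure"
    and Y \<epsilon> :: "nat \<Rightarrow> 'a \<Rightarrow> real"
    and N :: "'b measure"
    and G :: "real \<Rightarrow> 'b \<Rightarrow> real"
  assumes ab: "a < b"
    and beta: "0 < \<beta>"
    \<comment> \<open>f and phi are probability densities (of U and Z)\<close>
    and f_dens: "\<forall>y. 0 \<le> f y" "(\<integral>y. f y \<partial>lborel) = 1"
    and phi_dens: "\<forall>z. 0 \<le> \<phi> z" "(\<integral>z. \<phi> z \<partial>lborel) = 1"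
    \<comment> \<open>Assumption D(ii): continuity and support in [a,b] of f, phi, r = T phi\<close>
    and cont: "continuous_on UNIV f" "continuous_on UNIV \<phi>" "continuous_on UNIV (Top a b f \<phi>)"
    and supp: "\<forall>y. y \<notin> {a..b} \<longrightarrow> f y = 0" "\<forall>z. z \<notin> {a..b} \<longrightarrow> \<phi> z = 0"
              "\<forall>y. y \<notin> {a..b} \<longrightarrow> Top a b f \<phi> y = 0"
    \<comment> \<open>Assumption D(iii): f in C^s_M[a,b], s in (0,1]\<close>
    and s: "0 < s" "s \<le> 1"
    and hoelder: "\<forall>y\<in>{a..b}. \<bar>f y\<bar> \<le> M"
                 "\<forall>x\<in>{a..b}. \<forall>y\<in>{a..b}. \<bar>f x - f y\<bar> \<le> M * \<bar>x - y\<bar> powr s"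
    \<comment> \<open>Assumption D(iv): T one-to-one on L2[a,b]\<close>
    and inj: "\<forall>g\<in>L2ab a b. (\<forall>y\<in>{a..b}. Top a b f g y = 0) \<longrightarrow> norm2 a b g = 0"
    \<comment> \<open>source condition\<close>
    and src: "source_class a b M \<beta> C \<phi> f"
    \<comment> \<open>Assumption D(i): i.i.d. sample with density r = T phi, independent Rademacher multipliers\<close>
    and P: "prob_space M\<^sub>P"
    and Y_dist: "\<forall>i. distributed M\<^sub>P lborel (Y i) (\<lambda>y. ennreal (Top a b f \<phi> y))"
    and rad: "\<forall>i. AE \<omega> in M\<^sub>P. \<epsilon> i \<omega> \<in> {-1, 1}"
             "\<forall>i. \<epsilon> i \<in> borel_measurable M\<^sub>P"
             "\<forall>i. measure M\<^sub>P {\<omega>\<in>space M\<^sub>P. \<epsilon> i \<omega> = 1} = 1/2"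
    and indep: "prob_space.indep_vars M\<^sub>P (\<lambda>_. borel)
                  (\<lambda>k. case k of Inl i \<Rightarrow> Y i | Inr i \<Rightarrow> \<epsilon> i) UNIV"
    \<comment> \<open>regularization sequence\<close>
    and alpha: "\<forall>n. 0 < \<alpha> n" "\<alpha> \<longlonglongrightarrow> 0"
               "(\<lambda>n. \<alpha> n powr (3/2 + min \<beta> 1) * sqrt (real n)) \<longlonglongrightarrow> 0"
    \<comment> \<open>the Gaussian process G_2 (continuous version) with covariance E[f(Y-s)f(Y-t)]\<close>
    and GP: "centered_gaussian_process N {a..b} G
               (\<lambda>s t. prob_space.expectation M\<^sub>P (\<lambda>\<omega>. f (Y 0 \<omega> - s) * f (Y 0 \<omega> - t)))"
    and G_cont: "\<forall>\<omega>\<in>space N. continuous_on {a..b} (\<lambda>t. G t \<omega>)"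
  shows "\<forall>\<gamma>::real. 0 < \<gamma> \<and> \<gamma> < 1 \<longrightarrow>
           (\<lambda>n. prob_space.expectation M\<^sub>P (\<lambda>\<omega>. 2 * q_g N G a b f \<gamma> (\<alpha> n) n))
              \<in> O(\<lambda>n. 1 / (\<alpha> n powr (3/2) * sqrt (real n))) \<and>
           (\<forall>n\<ge>1. integrable M\<^sub>P (\<lambda>\<omega>. 2 * q_ci a b f \<gamma> (\<alpha> n) n Y \<epsilon> \<omega>)) \<and>
           (\<lambda>n. prob_space.expectation M\<^sub>P (\<lambda>\<omega>. 2 * q_ci a b f \<gamma> (\<alpha> n) n Y \<epsilon> \<omega>))
              \<in> O(\<lambda>n. 1 / (\<alpha> n powr (3/2) * sqrt (real n)))"
proof (intro allI impI)
  fix \<gamma> :: real assume \<gamma>: "0 < \<gamma> \<and> \<gamma> < 1"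
  have lg: "0 \<le> ln (2 / \<gamma>)"
  proof -
    have "1 \<le> 2 / \<gamma>" using \<gamma> by (simp add: field_simps)
    then show ?thesis by simp
  qed
  have dcI: "dc a b M s f"
    by (rule dc_from_assms[OF ab s(1) f_dens(2) cont(1) supp(1) hoelder(1) hoelder(2)])
  interpret PP: prob_space "M\<^sub>P" by (rule P)
  have Ym: "Y i \<in> borel_measurable M\<^sub>P" for i
    using distributed_measurable[OF Y_dist[rule_format, of i]] by (simp add: measurable_lborel1)
  have em: "\<epsilon> i \<in> borel_measurable M\<^sub>P" for i using rad(2) by simp
  define clip :: "real \<Rightarrow> real" where "clip = (\<lambda>x. max (-1) (min 1 x))"
  have clipm: "clip \<in> borel_measurable borel" unfolding clip_def by measurable
  define ec where "ec = (\<lambda>i \<omega>. clip (\<epsilon> i \<omega>))"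
  have ecm: "ec i \<in> borel_measurable M\<^sub>P" for i
    unfolding ec_def using measurable_compose[OF em clipm] by (simp add: comp_def)
  have ebd: "\<bar>ec i \<omega>\<bar> \<le> 1" for i \<omega> unfolding ec_def clip_def by (simp add: abs_le_iff)
  have AEe: "AE \<omega> in M\<^sub>P. \<forall>i. \<epsilon> i \<omega> = ec i \<omega>"
    unfolding AE_all_countable
  proof
    fix i show "AE \<omega> in M\<^sub>P. \<epsilon> i \<omega> = ec i \<omega>"
      using rad(1) by (rule_tac eventually_mono[OF rad(1)[rule_format, of i]]) (auto simp: ec_def clip_def)
  qed
  have emean: "PP.expectation (ec i) = 0" for i
  proof -
    define S where "S = {\<omega> \<in> space M\<^sub>P. \<epsilon> i \<omega> = 1}"
    have Sm: "S \<in> sets M\<^sub>P" unfolding S_def using em[of i] by measurable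
    have im: "indicator S \<in> borel_measurable M\<^sub>P" using Sm by simp
    have eq: "AE \<omega> in M\<^sub>P. ec i \<omega> = 2 * indicator S \<omega> - (1::real)"
      using rad(1)[rule_format, of i] AE_space by eventually_elim (auto simp: ec_def clip_def S_def indicator_def)
    have ii: "integrable M\<^sub>P (indicator S :: 'a \<Rightarrow> real)"
      by (rule PP.integrable_const_bound[where B=1]) (use im in \<open>auto simp: indicator_def\<close>)
    have "PP.expectation (ec i) = PP.expectation (\<lambda>\<omega>. 2 * indicator S \<omega> - (1::real))"
    proof (rule integral_cong_AE[OF ecm _ eq])
      show "(\<lambda>\<omega>. 2 * indicator S \<omega> - (1::real)) \<in> borel_measurable M\<^sub>P"
        by (intro borel_measurable_diff borel_measurable_times borel_measurable_const im)
    qed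
    also have "\<dots> = 2 * PP.expectation (indicator S) - (1::real)"
      using ii by (simp add: Bochner_Integration.integral_diff PP.prob_space)
    also have "PP.expectation (indicator S) = (1/2 :: real)"
      using Sm rad(3)[rule_format, of i] by (simp add: S_def sets.Int_space_eq2)
    finally show ?thesis by simp
  qed
  have indep_ec: "prob_space.indep_vars M\<^sub>P (\<lambda>_. borel) (\<lambda>k. case k of Inl i \<Rightarrow> Y i | Inr i \<Rightarrow> ec i) UNIV"
  proof -
    define F :: "nat + nat \<Rightarrow> real \<Rightarrow> real" where "F = (\<lambda>k. case k of Inl _ \<Rightarrow> (\<lambda>x. x) | Inr _ \<Rightarrow> clip)"
    have c: "PP.indep_vars (\<lambda>_. borel) (\<lambda>k \<omega>. F k ((case k of Inl i \<Rightarrow> Y i | Inr i \<Rightarrow> \<epsilon> i) \<omega>)) UNIV"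
    proof (rule PP.indep_vars_compose2[OF indep])
      fix k :: "nat + nat" show "F k \<in> borel \<rightarrow>\<^sub>M borel" using clipm by (cases k) (auto simp: F_def)
    qed
    show ?thesis
      by (rule PP.indep_vars_cong[THEN iffD1, OF _ _ _ c]) (auto simp: F_def ec_def split: sum.splits)
  qed
  interpret D: dcp a b M s f "M\<^sub>P" Y ec
    unfolding dcp_def dcp_axioms_def dcm_def dcm_axioms_def using dcI P Ym ecm ebd emean indep_ec by blast
  interpret O: dcm a b M s f "M\<^sub>P" Y \<epsilon>
    unfolding dcm_def dcm_axioms_def using dcI P Ym em by blast
  have ev1: "eventually (\<lambda>n. \<alpha> n < 1) sequentially" using order_tendstoD(2)[OF alpha(2)] by simp
  define K where "K = opnorm_2inf a b (Tadj a b f)"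
  define c2 where "c2 = sup_quantile N a b G \<gamma>"
  define g where "g = (\<lambda>n. 1 / (\<alpha> n powr (3/2) * sqrt (real n)))"
  have gnorm: "norm (g n) = \<bar>g n\<bar>" for n by simp
  have P1: "(\<lambda>n. PP.expectation (\<lambda>\<omega>. 2 * q_g N G a b f \<gamma> (\<alpha> n) n)) \<in> O(\<lambda>n. 1 / (\<alpha> n powr (3/2) * sqrt (real n)))"
  proof (rule bigoI[where c="2 * \<bar>c2\<bar> * (\<bar>K\<bar> / 2 + 1)"])
    show "\<forall>\<^sub>F n in at_top. norm (PP.expectation (\<lambda>\<omega>. 2 * q_g N G a b f \<gamma> (\<alpha> n) n))
        \<le> 2 * \<bar>c2\<bar> * (\<bar>K\<bar> / 2 + 1) * norm (1 / (\<alpha> n powr (3/2) * sqrt (real n)))"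
      using ev1
    proof eventually_elim
      case (elim n)
      have sa: "sqrt (\<alpha> n) \<le> 1" using elim alpha(1) by simp
      have "PP.expectation (\<lambda>\<omega>. 2 * q_g N G a b f \<gamma> (\<alpha> n) n) = 2 * q_g N G a b f \<gamma> (\<alpha> n) n"
        by (simp add: PP.prob_space)
      also have "\<dots> = (2 * c2 * (K / 2 + sqrt (\<alpha> n))) * (1 / (\<alpha> n powr (3/2) * sqrt (real n)))"
        by (simp add: q_g_def c2_def K_def)
      finally have e: "PP.expectation (\<lambda>\<omega>. 2 * q_g N G a b f \<gamma> (\<alpha> n) n) = (2 * c2 * (K / 2 + sqrt (\<alpha> n))) * (1 / (\<alpha> n powr (3/2) * sqrt (real n)))" .
      have "\<bar>2 * c2 * (K / 2 + sqrt (\<alpha> n))\<bar> \<le> 2 * \<bar>c2\<bar> * (\<bar>K\<bar> / 2 + 1)"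
      proof -
        have "\<bar>K / 2 + sqrt (\<alpha> n)\<bar> \<le> \<bar>K\<bar> / 2 + 1"
          using sa abs_ge_self[of K] abs_ge_minus_self[of K] real_sqrt_ge_zero[OF less_imp_le[OF alpha(1)[rule_format, of n]]] unfolding abs_le_iff by linarith
        then show ?thesis by (simp add: abs_mult mult_left_mono)
      qed
      then show ?case unfolding e real_norm_def abs_mult[of "2 * c2 * (K / 2 + sqrt (\<alpha> n))"]
        by (intro mult_right_mono) auto
    qed
  qed
  define Cn where "Cn = (\<lambda>n. 3 * supnorm a b f * (K / 2 + sqrt (\<alpha> n)) * sqrt (2 * ln (2 / \<gamma>)) / (\<alpha> n powr (3/2) * sqrt (real n)))"
  have qci_eq: "q_ci a b f \<gamma> (\<alpha> n) n Y \<epsilon> \<omega> = 2 * supnorm a b (resolvent a b f (\<alpha> n) (O.gfun n \<omega>)) + Cn n" for n \<omega>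
    unfolding q_ci_def nu_eps_def O.gfun_def Cn_def K_def by simp
  have gf_eq: "AE \<omega> in M\<^sub>P. supnorm a b (resolvent a b f (\<alpha> n) (O.gfun n \<omega>)) = supnorm a b (resolvent a b f (\<alpha> n) (D.gfun n \<omega>))" for n
    by (rule eventually_mono[OF AEe]) (simp add: O.gfun_def D.gfun_def)
  have Om: "(\<lambda>\<omega>. supnorm a b (resolvent a b f (\<alpha> n) (O.gfun n \<omega>))) \<in> borel_measurable M\<^sub>P" for n
    by (rule O.sup_nu_meas) (use alpha(1) in auto)
  have Dm: "(\<lambda>\<omega>. supnorm a b (resolvent a b f (\<alpha> n) (D.gfun n \<omega>))) \<in> borel_measurable M\<^sub>P" for n
    by (rule D.sup_nu_meas) (use alpha(1) in auto)
  have Oint: "integrable M\<^sub>P (\<lambda>\<omega>. supnorm a b (resolvent a b f (\<alpha> n) (O.gfun n \<omega>)))" if n: "1 \<le> n" for n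
    using integrable_cong_AE[OF Om Dm gf_eq] D.nu_int_bound(1)[of "\<alpha> n" n] alpha(1) n by simp
  have OE: "PP.expectation (\<lambda>\<omega>. supnorm a b (resolvent a b f (\<alpha> n) (O.gfun n \<omega>))) =
      PP.expectation (\<lambda>\<omega>. supnorm a b (resolvent a b f (\<alpha> n) (D.gfun n \<omega>)))" for n
    by (rule integral_cong_AE[OF Om Dm gf_eq])
  have E2: "PP.expectation (\<lambda>\<omega>. 2 * q_ci a b f \<gamma> (\<alpha> n) n Y \<epsilon> \<omega>) =
      4 * PP.expectation (\<lambda>\<omega>. supnorm a b (resolvent a b f (\<alpha> n) (D.gfun n \<omega>))) + 2 * Cn n" if n: "1 \<le> n" for n
  proof -
    have "PP.expectation (\<lambda>\<omega>. 2 * q_ci a b f \<gamma> (\<alpha> n) n Y \<epsilon> \<omega>) =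
        PP.expectation (\<lambda>\<omega>. 4 * supnorm a b (resolvent a b f (\<alpha> n) (O.gfun n \<omega>)) + 2 * Cn n)"
      unfolding qci_eq by (simp add: algebra_simps)
    also have "\<dots> = 4 * PP.expectation (\<lambda>\<omega>. supnorm a b (resolvent a b f (\<alpha> n) (O.gfun n \<omega>))) + 2 * Cn n"
      using Oint[OF n] by (simp add: Bochner_Integration.integral_add PP.prob_space)
    finally show ?thesis unfolding OE .
  qed
  have P2: "\<forall>n\<ge>1. integrable M\<^sub>P (\<lambda>\<omega>. 2 * q_ci a b f \<gamma> (\<alpha> n) n Y \<epsilon> \<omega>)"
  proof (intro allI impI)
    fix n :: nat assume n: "1 \<le> n"
    show "integrable M\<^sub>P (\<lambda>\<omega>. 2 * q_ci a b f \<gamma> (\<alpha> n) n Y \<epsilon> \<omega>)"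
      unfolding qci_eq using Oint[OF n] by simp
  qed
  define m where "m = nat \<lceil>1 / s\<rceil>"
  have m1: "1 \<le> real m * s"
  proof -
    have "1 / s \<le> real m" unfolding m_def by linarith
    then show ?thesis using s(1) by (simp add: field_simps)
  qed
  define Cm where "Cm = M * sqrt (2 * (ln 4 + 5 * (real m + 1))) + M * ((b - a) powr s + 1) + M\<^sup>2 * (b - a) / 2"
  define C' where "C' = 3 * \<bar>supnorm a b f\<bar> * (\<bar>K\<bar> / 2 + 1) * sqrt (2 * ln (2 / \<gamma>))"
  have P3: "(\<lambda>n. PP.expectation (\<lambda>\<omega>. 2 * q_ci a b f \<gamma> (\<alpha> n) n Y \<epsilon> \<omega>)) \<in> O(\<lambda>n. 1 / (\<alpha> n powr (3/2) * sqrt (real n)))"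
  proof (rule bigoI[where c="4 * Cm + 2 * C'"])
    have ev2: "eventually (\<lambda>n. \<alpha> n * ln (real n) \<le> 5) sequentially"
      by (rule ev_aln[OF alpha beta])
    have ev3: "eventually (\<lambda>n. 1 \<le> n) sequentially" by (rule eventually_ge_at_top)
    show "\<forall>\<^sub>F n in at_top. norm (PP.expectation (\<lambda>\<omega>. 2 * q_ci a b f \<gamma> (\<alpha> n) n Y \<epsilon> \<omega>))
        \<le> (4 * Cm + 2 * C') * norm (1 / (\<alpha> n powr (3/2) * sqrt (real n)))"
      using ev1 ev2 ev3
    proof eventually_elim
      case (elim n)
      have a0: "0 < \<alpha> n" using alpha(1) by simp
      have gpos: "0 < 1 / (\<alpha> n powr (3/2) * sqrt (real n))" using a0 elim by simp
      define X where "X = PP.expectation (\<lambda>\<omega>. supnorm a b (resolvent a b f (\<alpha> n) (D.gfun n \<omega>)))"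
      have X0: "0 \<le> X" unfolding X_def
        by (rule integral_nonneg_AE) (auto intro!: AE_I2 D.sup_nonneg D.res_cont a0 D.gfun_cont)
      have X1: "X \<le> Cm * (1 / (\<alpha> n powr (3/2) * sqrt (real n)))"
        using D.nu_final[OF a0 _ elim(3) elim(2) m1] elim(1) unfolding X_def Cm_def by simp
      have C1: "\<bar>Cn n\<bar> \<le> C' * (1 / (\<alpha> n powr (3/2) * sqrt (real n)))"
      proof -
        have sa: "sqrt (\<alpha> n) \<le> 1" using elim a0 by simp
        have kk: "\<bar>K / 2 + sqrt (\<alpha> n)\<bar> \<le> \<bar>K\<bar> / 2 + 1"
          using sa abs_ge_self[of K] abs_ge_minus_self[of K] real_sqrt_ge_zero[OF less_imp_le[OF a0]] unfolding abs_le_iff by linarith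
        have "\<bar>Cn n\<bar> = 3 * \<bar>supnorm a b f\<bar> * \<bar>K / 2 + sqrt (\<alpha> n)\<bar> * sqrt (2 * ln (2 / \<gamma>)) * (1 / (\<alpha> n powr (3/2) * sqrt (real n)))"
          unfolding Cn_def using gpos lg by (simp add: abs_mult abs_divide)
        also have "\<dots> \<le> 3 * \<bar>supnorm a b f\<bar> * (\<bar>K\<bar> / 2 + 1) * sqrt (2 * ln (2 / \<gamma>)) * (1 / (\<alpha> n powr (3/2) * sqrt (real n)))"
          using kk gpos lg by (intro mult_right_mono mult_left_mono) auto
        finally show ?thesis unfolding C'_def .
      qed
      have "norm (PP.expectation (\<lambda>\<omega>. 2 * q_ci a b f \<gamma> (\<alpha> n) n Y \<epsilon> \<omega>)) = \<bar>4 * X + 2 * Cn n\<bar>"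
        using E2[OF elim(3)] unfolding X_def by simp
      also have "\<dots> \<le> 4 * X + 2 * \<bar>Cn n\<bar>" using X0 by linarith
      also have "\<dots> \<le> 4 * (Cm * (1 / (\<alpha> n powr (3/2) * sqrt (real n)))) + 2 * (C' * (1 / (\<alpha> n powr (3/2) * sqrt (real n))))"
        using X1 C1 by linarith
      also have "\<dots> = (4 * Cm + 2 * C') * (1 / (\<alpha> n powr (3/2) * sqrt (real n)))"
        by (simp only: distrib_right mult.assoc)
      also have "\<dots> = (4 * Cm + 2 * C') * norm (1 / (\<alpha> n powr (3/2) * sqrt (real n)))"
        using gpos by simp
      finally show ?case .
    qed
  qed
  show "(\<lambda>n. PP.expectation (\<lambda>\<omega>. 2 * q_g N G a b f \<gamma> (\<alpha> n) n)) \<in> O(\<lambda>n. 1 / (\<alpha> n powr (3 / 2) * sqrt (real n))) \<and>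
        (\<forall>n\<ge>1. integrable M\<^sub>P (\<lambda>\<omega>. 2 * q_ci a b f \<gamma> (\<alpha> n) n Y \<epsilon> \<omega>)) \<and>
        (\<lambda>n. PP.expectation (\<lambda>\<omega>. 2 * q_ci a b f \<gamma> (\<alpha> n) n Y \<epsilon> \<omega>)) \<in> O(\<lambda>n. 1 / (\<alpha> n powr (3 / 2) * sqrt (real n)))"
    using P1 P2 P3 by blast
qed


end
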